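(* Let $\Sigma$ be a set. Any subset of $T^1(\Sigma)$ closed under pruned multiplication, $+$ and $*$ forms an adequate semigroup under these operations (with $+$ and $*$ being the adequate-semigroup operations). Any subset of $T^1(\Sigma)$ closed under pruned multiplication and $+$ [respectively, pruned multiplication and $*$] forms a left adequate [respectively, right adequate] semigroup under these operations.
   Context: Semigroup notions: for a semigroup $S$ let $S^1=S$ if $S$ is a monoid and otherwise $S$ with an identity adjoined. $a\,\mathcal{L}^*\,b$ iff for all $x,y\in S^1$: $ax=ay\Leftrightarrow bx=by$; $a\,\mathcal{R}^*\,b$ iff for all $x,y\in S^1$: $xa=ya\Leftrightarrow xb=yb$. $S$ is left adequate if its idempotents commute and every $\mathcal{R}^*$-class contains an idempotent (necessarily unique, denoted $x^+$ for the class of $x$); right adequate if idempotents commute and every $\mathcal{L}^*$-class contains an idempotent ($x^*$); adequate if both. Trees: a $\Sigma$-tree is a finite directed graph whose underlying undirected graph is a tree, edges labelled by elements of $\Sigma$, with distinguished start and end vertices such that there is a (possibly empty) directed path from start to end vertex. A morphism $X\to Y$ maps vertices to vertices and edges to edges, preserving initial vertex, terminal vertex and label of edges and mapping start/end vertex to start/end vertex; isomorphisms are morphisms bijective on vertices and edges. A retraction is an idempotent morphism $X\to X$, its image being a retract; $X$ is pruned if it has no non-identity retraction. Every tree $X$ has a pruned retract, unique up to isomorphism, with isomorphism type $\overline{X}$. $T^1(\Sigma)$ is the set of isomorphism types of pruned $\Sigma$-trees. Unpruned operations: $X\times Y$ identifies the end vertex of (a copy of) $X$ with the start vertex of (a disjoint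 copy of) $Y$, start vertex that of $X$, end vertex that of $Y$; $X^{(+)}$ is $X$ with end vertex moved to the start vertex; $X^{( * )}$ is $X$ with start vertex moved to the end vertex. Pruned operations: $XY=\overline{X\times Y}$, $X^+=\overline{X^{(+)}}$, $X^*=\overline{X^{( * )}}$. *)

theory Defs
  imports Main
begin

text \<open>A Sigma-tree: finite vertex set (of natural numbers), labelled directed edges
  given as triples (initial vertex, label, terminal vertex), start and end vertex.\<close>

record 'a stree =
  verts :: "nat set"
  edges :: "(nat \<times> 'a \<times> nat) set"
  sv :: nat
  ev :: nat

definition dgraph :: "'a stree \<Rightarrow> (nat \<times> nat) set" where
  "dgraph X = {(u, v). \<exists>a. (u, a, v) \<in> edges X}"

definition ugraph :: "'a stree \<Rightarrow> (nat \<times> nat) set" where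
  "ugraph X = dgraph X \<union> (dgraph X)\<inverse>"

definition is_tree :: "'a set \<Rightarrow> 'a stree \<Rightarrow> bool" where
  "is_tree \<Sigma> X \<longleftrightarrow>
     finite (verts X) \<and> finite (edges X) \<and>
     sv X \<in> verts X \<and> ev X \<in> verts X \<and>
     (\<forall>(u, a, v) \<in> edges X. u \<in> verts X \<and> a \<in> \<Sigma> \<and> v \<in> verts X) \<and>
     card (edges X) + 1 = card (verts X) \<and>
     (\<forall>u \<in> verts X. \<forall>v \<in> verts X. (u, v) \<in> (ugraph X)\<^sup>*) \<and>
     (sv X, ev X) \<in> (dgraph X)\<^sup>*"

definition edge_map :: "(nat \<Rightarrow> nat) \<Rightarrow> nat \<times> 'a \<times> nat \<Rightarrow> nat \<times> 'a \<times> nat" where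
  "edge_map f = (\<lambda>(u, a, v). (f u, a, f v))"

definition morph :: "'a stree \<Rightarrow> 'a stree \<Rightarrow> (nat \<Rightarrow> nat) \<Rightarrow> bool" where
  "morph X Y f \<longleftrightarrow>
     (\<forall>v \<in> verts X. f v \<in> verts Y) \<and>
     (\<forall>e \<in> edges X. edge_map f e \<in> edges Y) \<and>
     f (sv X) = sv Y \<and> f (ev X) = ev Y"

definition tree_iso :: "'a stree \<Rightarrow> 'a stree \<Rightarrow> bool" where
  "tree_iso X Y \<longleftrightarrow> (\<exists>f. morph X Y f \<and> bij_betw f (verts X) (verts Y) \<and>
                          bij_betw (edge_map f) (edges X) (edges Y))"

definition retraction :: "'a stree \<Rightarrow> (nat \<Rightarrow> nat) \<Rightarrow> bool" where
  "retraction X r \<longleftrightarrow> morph X X r \<and> (\<forall>v \<in> verts X. r (r v) = r v)"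

definition retract_img :: "'a stree \<Rightarrow> (nat \<Rightarrow> nat) \<Rightarrow> 'a stree" where
  "retract_img X r = \<lparr>verts = r ` verts X, edges = edge_map r ` edges X,
                      sv = r (sv X), ev = r (ev X)\<rparr>"

definition pruned :: "'a stree \<Rightarrow> bool" where
  "pruned X \<longleftrightarrow> (\<forall>r. retraction X r \<longrightarrow> (\<forall>v \<in> verts X. r v = v))"

definition pruned_retract :: "'a stree \<Rightarrow> 'a stree \<Rightarrow> bool" where
  "pruned_retract X R \<longleftrightarrow> (\<exists>r. retraction X r \<and> R = retract_img X r \<and> pruned R)"

definition glue_map :: "'a stree \<Rightarrow> 'a stree \<Rightarrow> nat \<Rightarrow> nat" where
  "glue_map X Y v = (if v = sv Y then 2 * ev X else 2 * v + 1)"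

text \<open>X \<times> Y: disjoint copies (X on even numbers, Y on odd numbers), end vertex of X
  identified with start vertex of Y.\<close>
definition tprod :: "'a stree \<Rightarrow> 'a stree \<Rightarrow> 'a stree" where
  "tprod X Y = \<lparr>verts = (\<lambda>v. 2 * v) ` verts X \<union> glue_map X Y ` verts Y,
                edges = edge_map (\<lambda>v. 2 * v) ` edges X \<union> edge_map (glue_map X Y) ` edges Y,
                sv = 2 * sv X, ev = glue_map X Y (ev Y)\<rparr>"

definition tplus :: "'a stree \<Rightarrow> 'a stree" where
  "tplus X = X\<lparr>ev := sv X\<rparr>"

definition tstar :: "'a stree \<Rightarrow> 'a stree" where
  "tstar X = X\<lparr>sv := ev X\<rparr>"

definition iso_class :: "'a set \<Rightarrow> 'a stree \<Rightarrow> 'a stree set" where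
  "iso_class \<Sigma> X = {Y. is_tree \<Sigma> Y \<and> tree_iso X Y}"

definition T1 :: "'a set \<Rightarrow> 'a stree set set" where
  "T1 \<Sigma> = {iso_class \<Sigma> X | X. is_tree \<Sigma> X \<and> pruned X}"

text \<open>Pruned operations on isomorphism types: the isomorphism type of a pruned retract
  of the unpruned operation applied to representatives.\<close>
definition pmult :: "'a set \<Rightarrow> 'a stree set \<Rightarrow> 'a stree set \<Rightarrow> 'a stree set" where
  "pmult \<Sigma> C D = {Z. \<exists>X \<in> C. \<exists>Y \<in> D. \<exists>R. pruned_retract (tprod X Y) R \<and>
                                     is_tree \<Sigma> Z \<and> tree_iso R Z}"

definition pplus :: "'a set \<Rightarrow> 'a stree set \<Rightarrow> 'a stree set" where
  "pplus \<Sigma> C = {Z. \<exists>X \<in> C. \<exists>R. pruned_retract (tplus X) R \<and> is_tree \<Sigma> Z \<and> tree_iso R Z}"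

definition pstar :: "'a set \<Rightarrow> 'a stree set \<Rightarrow> 'a stree set" where
  "pstar \<Sigma> C = {Z. \<exists>X \<in> C. \<exists>R. pruned_retract (tstar X) R \<and> is_tree \<Sigma> Z \<and> tree_iso R Z}"

text \<open>S^1: None is the adjoined identity (adjoining it even when S is a monoid
  gives the same relations L*, R*).\<close>
definition S1 :: "'b set \<Rightarrow> 'b option set" where
  "S1 S = insert None (Some ` S)"

definition lmul1 :: "('b \<Rightarrow> 'b \<Rightarrow> 'b) \<Rightarrow> 'b option \<Rightarrow> 'b \<Rightarrow> 'b" where
  "lmul1 m x a = (case x of None \<Rightarrow> a | Some y \<Rightarrow> m y a)"

definition rmul1 :: "('b \<Rightarrow> 'b \<Rightarrow> 'b) \<Rightarrow> 'b \<Rightarrow> 'b option \<Rightarrow> 'b" where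
  "rmul1 m a x = (case x of None \<Rightarrow> a | Some y \<Rightarrow> m a y)"

definition Lstar :: "'b set \<Rightarrow> ('b \<Rightarrow> 'b \<Rightarrow> 'b) \<Rightarrow> 'b \<Rightarrow> 'b \<Rightarrow> bool" where
  "Lstar S m a b \<longleftrightarrow> (\<forall>x \<in> S1 S. \<forall>y \<in> S1 S.
      rmul1 m a x = rmul1 m a y \<longleftrightarrow> rmul1 m b x = rmul1 m b y)"

definition Rstar :: "'b set \<Rightarrow> ('b \<Rightarrow> 'b \<Rightarrow> 'b) \<Rightarrow> 'b \<Rightarrow> 'b \<Rightarrow> bool" where
  "Rstar S m a b \<longleftrightarrow> (\<forall>x \<in> S1 S. \<forall>y \<in> S1 S.
      lmul1 m x a = lmul1 m y a \<longleftrightarrow> lmul1 m x b = lmul1 m y b)"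

definition semigroup_on :: "'b set \<Rightarrow> ('b \<Rightarrow> 'b \<Rightarrow> 'b) \<Rightarrow> bool" where
  "semigroup_on S m \<longleftrightarrow> (\<forall>a \<in> S. \<forall>b \<in> S. m a b \<in> S) \<and>
     (\<forall>a \<in> S. \<forall>b \<in> S. \<forall>c \<in> S. m (m a b) c = m a (m b c))"

definition idem_commute :: "'b set \<Rightarrow> ('b \<Rightarrow> 'b \<Rightarrow> 'b) \<Rightarrow> bool" where
  "idem_commute S m \<longleftrightarrow> (\<forall>e \<in> S. \<forall>f \<in> S. m e e = e \<and> m f f = f \<longrightarrow> m e f = m f e)"

definition left_adequate :: "'b set \<Rightarrow> ('b \<Rightarrow> 'b \<Rightarrow> 'b) \<Rightarrow> bool" where
  "left_adequate S m \<longleftrightarrow> semigroup_on S m \<and> idem_commute S m \<and>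
     (\<forall>a \<in> S. \<exists>e \<in> S. m e e = e \<and> Rstar S m e a)"

definition right_adequate :: "'b set \<Rightarrow> ('b \<Rightarrow> 'b \<Rightarrow> 'b) \<Rightarrow> bool" where
  "right_adequate S m \<longleftrightarrow> semigroup_on S m \<and> idem_commute S m \<and>
     (\<forall>a \<in> S. \<exists>e \<in> S. m e e = e \<and> Lstar S m e a)"

definition adequate :: "'b set \<Rightarrow> ('b \<Rightarrow> 'b \<Rightarrow> 'b) \<Rightarrow> bool" where
  "adequate S m \<longleftrightarrow> left_adequate S m \<and> right_adequate S m"

text \<open>p is the "+" operation of S: p a is the (unique) idempotent in the R*-class of a.\<close>
definition is_plus_op :: "'b set \<Rightarrow> ('b \<Rightarrow> 'b \<Rightarrow> 'b) \<Rightarrow> ('b \<Rightarrow> 'b) \<Rightarrow> bool" where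
  "is_plus_op S m p \<longleftrightarrow> (\<forall>a \<in> S. p a \<in> S \<and> m (p a) (p a) = p a \<and> Rstar S m (p a) a)"

definition is_star_op :: "'b set \<Rightarrow> ('b \<Rightarrow> 'b \<Rightarrow> 'b) \<Rightarrow> ('b \<Rightarrow> 'b) \<Rightarrow> bool" where
  "is_star_op S m p \<longleftrightarrow> (\<forall>a \<in> S. p a \<in> S \<and> m (p a) (p a) = p a \<and> Lstar S m (p a) a)"

definition closed1 :: "'b set \<Rightarrow> ('b \<Rightarrow> 'b) \<Rightarrow> bool" where
  "closed1 S f \<longleftrightarrow> (\<forall>a \<in> S. f a \<in> S)"

definition closed2 :: "'b set \<Rightarrow> ('b \<Rightarrow> 'b \<Rightarrow> 'b) \<Rightarrow> bool" where
  "closed2 S m \<longleftrightarrow> (\<forall>a \<in> S. \<forall>b \<in> S. m a b \<in> S)"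

end

theory Submission
  imports Defs "HOL-Library.FuncSet"
begin


definition hom :: "'a stree \<Rightarrow> 'a stree \<Rightarrow> (nat \<Rightarrow> nat) \<Rightarrow> bool" where
  "hom X Y f \<longleftrightarrow> (\<forall>v \<in> verts X. f v \<in> verts Y) \<and> (\<forall>e \<in> edges X. edge_map f e \<in> edges Y)"

lemma morph_hom: "morph X Y f \<longleftrightarrow> hom X Y f \<and> f (sv X) = sv Y \<and> f (ev X) = ev Y"
  by (auto simp: morph_def hom_def)

definition wfs :: "'a stree \<Rightarrow> bool" where
  "wfs X \<longleftrightarrow> sv X \<in> verts X \<and> ev X \<in> verts X \<and> (\<forall>(u, a, v) \<in> edges X. u \<in> verts X \<and> v \<in> verts X)"

lemma edge_map_simp[simp]: "edge_map f (u, a, v) = (f u, a, f v)"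
  by (simp add: edge_map_def)

lemma hom_comp: "hom X Y f \<Longrightarrow> hom Y Z g \<Longrightarrow> hom X Z (g \<circ> f)"
  unfolding hom_def by (fastforce simp: edge_map_def split: prod.splits)

lemma morph_comp: "morph X Y f \<Longrightarrow> morph Y Z g \<Longrightarrow> morph X Z (g \<circ> f)"
  using hom_comp by (auto simp: morph_hom)

lemma morph_id: "morph X X id"
  by (auto simp: morph_def edge_map_def split: prod.splits)

lemma morph_id': "morph X X (\<lambda>x. x)"
  using morph_id by (simp add: id_def)

definition hle :: "'a stree \<Rightarrow> 'a stree \<Rightarrow> bool" where
  "hle X Y \<longleftrightarrow> (\<exists>f. morph X Y f)"

definition heq :: "'a stree \<Rightarrow> 'a stree \<Rightarrow> bool" where
  "heq X Y \<longleftrightarrow> hle X Y \<and> hle Y X"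

lemma hle_refl: "hle X X" using morph_id unfolding hle_def by blast
lemma hle_trans: "hle X Y \<Longrightarrow> hle Y Z \<Longrightarrow> hle X Z" using morph_comp unfolding hle_def by blast
lemma heq_refl: "heq X X" by (simp add: heq_def hle_refl)
lemma heq_sym: "heq X Y \<Longrightarrow> heq Y X" by (simp add: heq_def)
lemma heq_trans: "heq X Y \<Longrightarrow> heq Y Z \<Longrightarrow> heq X Z" using hle_trans unfolding heq_def by blast

lemma is_tree_wf: "is_tree S X \<Longrightarrow> wfs X"
  unfolding is_tree_def wfs_def by blast

lemma tree_iso_refl: "tree_iso X X"
  unfolding tree_iso_def
proof (rule exI[of _ id], intro conjI)
  show "morph X X id" by (rule morph_id)
  show "bij_betw id (verts X) (verts X)" by simp
  have e: "edge_map id = id" by (auto simp: edge_map_def)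
  show "bij_betw (edge_map id) (edges X) (edges X)" by (simp only: e bij_betw_id)
qed

lemma iso_inv_morph:
  assumes "wfs X" "morph X Z f" "bij_betw f (verts X) (verts Z)" "bij_betw (edge_map f) (edges X) (edges Z)"
  shows "morph Z X (inv_into (verts X) f)"
proof -
  let ?g = "inv_into (verts X) f"
  have inj: "inj_on f (verts X)" and im: "f ` verts X = verts Z" using assms(3) by (auto simp: bij_betw_def)
  have eim: "edge_map f ` edges X = edges Z" using assms(4) by (auto simp: bij_betw_def)
  have sX: "sv X \<in> verts X" and eX: "ev X \<in> verts X" using assms(1) by (auto simp: wfs_def)
  have 1: "\<forall>v\<in>verts Z. ?g v \<in> verts X" using im by (auto intro: inv_into_into)
  have 2: "\<forall>e\<in>edges Z. edge_map ?g e \<in> edges X"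
  proof
    fix e assume "e \<in> edges Z"
    then obtain e' where e': "e' \<in> edges X" "e = edge_map f e'" using eim by blast
    obtain u a v where "e' = (u,a,v)" by (cases e') auto
    then have uv: "(u,a,v) \<in> edges X" "e = (f u, a, f v)" using e' by auto
    then have "u \<in> verts X" "v \<in> verts X" using assms(1) by (auto simp: wfs_def)
    then show "edge_map ?g e \<in> edges X" using uv inj by simp
  qed
  have fs: "f (sv X) = sv Z" "f (ev X) = ev Z" using assms(2) by (auto simp: morph_def)
  have 3: "?g (sv Z) = sv X" "?g (ev Z) = ev X" using inv_into_f_f[OF inj sX] inv_into_f_f[OF inj eX] fs by auto
  show ?thesis using 1 2 3 by (simp add: morph_def)
qed

lemma iso_heq: "wfs X \<Longrightarrow> tree_iso X Z \<Longrightarrow> heq X Z"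
  unfolding tree_iso_def heq_def hle_def using iso_inv_morph by blast

lemma morph_retraction_img:
  assumes "morph X Y f"
  shows "f ` verts X \<subseteq> verts Y"
  using assms by (auto simp: morph_def)

lemma iso_pruned:
  assumes "wfs X" "tree_iso X Z" "pruned X"
  shows "pruned Z"
proof -
  obtain f where f: "morph X Z f" "bij_betw f (verts X) (verts Z)" "bij_betw (edge_map f) (edges X) (edges Z)"
    using assms(2) by (auto simp: tree_iso_def)
  let ?g = "inv_into (verts X) f"
  have g: "morph Z X ?g" using iso_inv_morph[OF assms(1) f] .
  have inj: "inj_on f (verts X)" and im: "f ` verts X = verts Z" using f(2) by (auto simp: bij_betw_def)
  show ?thesis unfolding pruned_def
  proof (intro allI impI ballI)
    fix r w assume r: "retraction Z r" and w: "w \<in> verts Z"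
    let ?r = "?g \<circ> r \<circ> f"
    have m: "morph X X ?r" using morph_comp[OF morph_comp[OF f(1)] g] r by (auto simp: retraction_def comp_assoc)
    have fg: "\<And>z. z \<in> verts Z \<Longrightarrow> f (?g z) = z" using im by (auto intro: f_inv_into_f)
    have rZ: "\<And>z. z \<in> verts Z \<Longrightarrow> r z \<in> verts Z" using r by (auto simp: retraction_def morph_def)
    have fX: "\<And>v. v \<in> verts X \<Longrightarrow> f v \<in> verts Z" using im by auto
    have "\<forall>v\<in>verts X. ?r (?r v) = ?r v"
    proof
      fix v assume v: "v \<in> verts X"
      have "f (?g (r (f v))) = r (f v)" using fg rZ fX v by blast
      then show "?r (?r v) = ?r v" using r fX v by (simp add: retraction_def)
    qed
    then have "retraction X ?r" using m by (simp add: retraction_def)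
    then have idr: "\<forall>v\<in>verts X. ?r v = v" using assms(3) unfolding pruned_def by blast
    obtain v where v: "v \<in> verts X" "w = f v" using w im by auto
    have "r w = f (?r v)" using fg rZ fX v by simp
    then show "r w = w" using idr v by simp
  qed
qed




lemma funpow_into: "\<forall>v\<in>V. h v \<in> V \<Longrightarrow> v \<in> V \<Longrightarrow> (h^^n) v \<in> V"
  by (induction n) auto

lemma idem_power:
  assumes fin: "finite V" and hV: "\<forall>v\<in>V. h v \<in> V"
  shows "\<exists>k\<ge>1. \<forall>v\<in>V. (h^^k) ((h^^k) v) = (h^^k) v"
proof -
  let ?H = "\<lambda>n. restrict (h^^n) V"
  have "range ?H \<subseteq> V \<rightarrow>\<^sub>E V" using funpow_into[OF hV] by auto
  then have "finite (range ?H)" using finite_PiE[OF fin, of "\<lambda>_. V"] fin finite_subset by blast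
  then have "\<not> inj ?H" using finite_imageD infinite_UNIV_nat by blast
  then obtain i j where ij: "i \<noteq> j" "?H i = ?H j" unfolding inj_def by blast
  have "\<exists>i j. i < j \<and> (\<forall>v\<in>V. (h^^i) v = (h^^j) v)"
  proof (cases "i < j")
    case True then show ?thesis using ij by (metis restrict_apply')
  next
    case False then have "j < i" using ij by simp
    then show ?thesis using ij by (metis restrict_apply')
  qed
  then obtain i j where ij: "i < j" "\<forall>v\<in>V. (h^^i) v = (h^^j) v" by blast
  define p where "p = j - i"
  have p1: "p \<ge> 1" using ij by (simp add: p_def)
  have shift: "\<forall>v\<in>V. (h^^(m + j)) v = (h^^(m + i)) v" for m
    using ij(2) by (simp add: funpow_add)
  have A: "\<forall>v\<in>V. (h^^(m + i + q*p)) v = (h^^(m+i)) v" for q m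
  proof (induction q arbitrary: m)
    case 0 then show ?case by simp
  next
    case (Suc q)
    have e: "m + i + Suc q * p = (m + q*p) + j" using ij by (simp add: p_def)
    show ?case
    proof
      fix v assume v: "v \<in> V"
      have "(h^^(m + i + Suc q * p)) v = (h^^((m + q*p) + j)) v" by (simp only: e)
      also have "\<dots> = (h^^((m + q*p) + i)) v" using shift v by blast
      also have "\<dots> = (h^^(m + i + q*p)) v" by (simp add: algebra_simps)
      also have "\<dots> = (h^^(m+i)) v" using Suc v by blast
      finally show "(h^^(m + i + Suc q * p)) v = (h^^(m+i)) v" .
    qed
  qed
  define k where "k = (i+1)*p"
  have "(i+1)*1 \<le> (i+1)*p" using p1 by (rule mult_le_mono2)
  then have ki: "k \<ge> i" by (simp add: k_def)
  have eq: "k + k = (k - i) + i + (i+1)*p" using ki by (simp add: k_def)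
  have "\<forall>v\<in>V. (h^^k) ((h^^k) v) = (h^^k) v"
  proof
    fix v assume v: "v \<in> V"
    have "(h^^k) ((h^^k) v) = (h^^(k+k)) v" by (simp add: funpow_add)
    also have "\<dots> = (h^^((k - i) + i + (i+1)*p)) v" by (simp only: eq)
    also have "\<dots> = (h^^((k-i)+i)) v" using A v by blast
    also have "\<dots> = (h^^k) v" using ki by simp
    finally show "(h^^k) ((h^^k) v) = (h^^k) v" .
  qed
  moreover have "k \<ge> 1" using p1 by (simp add: k_def)
  ultimately show ?thesis by blast
qed

lemma morph_funpow: "morph X X h \<Longrightarrow> morph X X (h^^n)"
proof (induction n)
  case 0 then show ?case using morph_id' by simp
next
  case (Suc n) then show ?case using morph_comp[OF Suc.IH Suc.prems] by (simp only: funpow.simps(2))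
qed




lemma pruned_endo_inj:
  assumes "finite (verts X)" "pruned X" "morph X X h"
  shows "inj_on h (verts X)"
proof -
  have hV: "\<forall>v\<in>verts X. h v \<in> verts X" using assms(3) by (simp add: morph_def)
  obtain k where k: "k \<ge> 1" "\<forall>v\<in>verts X. (h^^k) ((h^^k) v) = (h^^k) v"
    using idem_power[OF assms(1) hV] by blast
  have "retraction X (h^^k)" using k morph_funpow[OF assms(3)] by (simp add: retraction_def)
  then have idk: "\<forall>v\<in>verts X. (h^^k) v = v" using assms(2) unfolding pruned_def by blast
  have kk: "(h^^k) v = (h^^(k-1)) (h v)" for v
  proof -
    have "k = Suc (k-1)" using k by simp
    then have "(h^^k) = (h^^(k-1)) \<circ> h" by (metis funpow_Suc_right)
    then show ?thesis by simp
  qed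
  show ?thesis unfolding inj_on_def
  proof (intro ballI impI)
    fix u v assume "u \<in> verts X" "v \<in> verts X" "h u = h v"
    then show "u = v" using idk kk by metis
  qed
qed

lemma inj_on_comp_left: "inj_on (g \<circ> f) A \<Longrightarrow> inj_on f A"
  by (auto simp: inj_on_def)

lemma edge_map_inj:
  assumes "wfs X" "inj_on f (verts X)"
  shows "inj_on (edge_map f) (edges X)"
  unfolding inj_on_def
proof (intro ballI impI)
  fix e1 e2 assume e: "e1 \<in> edges X" "e2 \<in> edges X" "edge_map f e1 = edge_map f e2"
  obtain u1 a1 v1 where 1: "e1 = (u1,a1,v1)" by (cases e1) auto
  obtain u2 a2 v2 where 2: "e2 = (u2,a2,v2)" by (cases e2) auto
  have "u1 \<in> verts X" "v1 \<in> verts X" "u2 \<in> verts X" "v2 \<in> verts X"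
    using assms(1) e 1 2 by (auto simp: wfs_def)
  then show "e1 = e2" using e 1 2 assms(2) by (auto simp: inj_on_def)
qed

lemma bij_from_card:
  assumes "inj_on f A" "f ` A \<subseteq> B" "finite B" "card B \<le> card A"
  shows "bij_betw f A B"
proof -
  have "card (f ` A) = card A" using card_image[OF assms(1)] .
  then have "f ` A = B" using card_subset_eq[OF assms(3) assms(2)] assms(4) card_mono[OF assms(3) assms(2)] by simp
  then show ?thesis using assms(1) by (simp add: bij_betw_def)
qed

lemma pruned_heq_iso:
  assumes fX: "finite (verts X)" "finite (edges X)" "wfs X" "pruned X"
      and fY: "finite (verts Y)" "finite (edges Y)" "wfs Y" "pruned Y"
      and f: "morph X Y f" and g: "morph Y X g"
  shows "tree_iso X Y"
proof -
  have i1: "inj_on f (verts X)" using pruned_endo_inj[OF fX(1) fX(4) morph_comp[OF f g]] inj_on_comp_left by blast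
  have i2: "inj_on g (verts Y)" using pruned_endo_inj[OF fY(1) fY(4) morph_comp[OF g f]] inj_on_comp_left by blast
  have s1: "f ` verts X \<subseteq> verts Y" using f by (auto simp: morph_def)
  have s2: "g ` verts Y \<subseteq> verts X" using g by (auto simp: morph_def)
  have c2: "card (verts Y) \<le> card (verts X)" using card_inj_on_le[OF i2 s2 fX(1)] .
  have b1: "bij_betw f (verts X) (verts Y)" using bij_from_card[OF i1 s1 fY(1) c2] .
  have j1: "inj_on (edge_map f) (edges X)" using edge_map_inj[OF fX(3) i1] .
  have j2: "inj_on (edge_map g) (edges Y)" using edge_map_inj[OF fY(3) i2] .
  have t1: "edge_map f ` edges X \<subseteq> edges Y" using f by (auto simp: morph_def)
  have t2: "edge_map g ` edges Y \<subseteq> edges X" using g by (auto simp: morph_def)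
  have c3: "card (edges Y) \<le> card (edges X)" using card_inj_on_le[OF j2 t2 fX(2)] .
  have b2: "bij_betw (edge_map f) (edges X) (edges Y)" using bij_from_card[OF j1 t1 fY(2) c3] .
  show ?thesis unfolding tree_iso_def using f b1 b2 by blast
qed




definition copair :: "(nat \<Rightarrow> nat) \<Rightarrow> (nat \<Rightarrow> nat) \<Rightarrow> nat \<Rightarrow> nat" where
  "copair f g w = (if even w then f (w div 2) else g (w div 2))"

lemma copair_2[simp]: "copair f g (2 * v) = f v"
  by (simp add: copair_def)

lemma copair_even[simp]: "even w \<Longrightarrow> copair f g w = f (w div 2)"
  by (simp add: copair_def)

lemma copair_glue: "f (ev A) = g (sv B) \<Longrightarrow> copair f g (glue_map A B v) = g v"
  by (simp add: copair_def glue_map_def)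

lemma glue_sv[simp]: "glue_map A B (sv B) = 2 * ev A"
  by (simp add: glue_map_def)

lemma tprod_simps[simp]:
  "verts (tprod X Y) = (\<lambda>v. 2 * v) ` verts X \<union> glue_map X Y ` verts Y"
  "edges (tprod X Y) = edge_map (\<lambda>v. 2 * v) ` edges X \<union> edge_map (glue_map X Y) ` edges Y"
  "sv (tprod X Y) = 2 * sv X"
  "ev (tprod X Y) = glue_map X Y (ev Y)"
  by (simp_all add: tprod_def)

lemma tplus_simps[simp]: "verts (tplus X) = verts X" "edges (tplus X) = edges X"
  "sv (tplus X) = sv X" "ev (tplus X) = sv X"
  by (simp_all add: tplus_def)

lemma tstar_simps[simp]: "verts (tstar X) = verts X" "edges (tstar X) = edges X"
  "sv (tstar X) = ev X" "ev (tstar X) = ev X"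
  by (simp_all add: tstar_def)

lemma hom_copair:
  assumes "hom A W f" "hom B W g" "f (ev A) = g (sv B)"
  shows "hom (tprod A B) W (copair f g)"
proof -
  have cg: "\<And>v. copair f g (glue_map A B v) = g v" using copair_glue[of f A g B, OF assms(3)] .
  have 1: "\<forall>v\<in>verts (tprod A B). copair f g v \<in> verts W"
    using assms(1,2) cg by (auto simp: hom_def)
  have 2: "\<forall>e\<in>edges (tprod A B). edge_map (copair f g) e \<in> edges W"
  proof
    fix e assume "e \<in> edges (tprod A B)"
    then consider (a) e' where "e' \<in> edges A" "e = edge_map (\<lambda>v. 2 * v) e'"
      | (b) e' where "e' \<in> edges B" "e = edge_map (glue_map A B) e'" by auto
    then show "edge_map (copair f g) e \<in> edges W"
    proof cases
      case a then show ?thesis using assms(1) by (cases e') (auto simp: hom_def)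
    next
      case b then show ?thesis using assms(2) cg by (cases e') (auto simp: hom_def)
    qed
  qed
  show ?thesis using 1 2 by (simp add: hom_def)
qed

lemma hom_inj1: "hom A (tprod A B) (\<lambda>v. 2 * v)"
  by (auto simp: hom_def)

lemma hom_inj2: "hom B (tprod A B) (glue_map A B)"
  by (auto simp: hom_def)

lemma hom_comp': "hom X Y f \<Longrightarrow> hom Y Z g \<Longrightarrow> hom X Z (\<lambda>v. g (f v))"
  using hom_comp[of X Y f Z g] by (simp add: comp_def)

lemma tprod_mono:
  assumes f: "morph X X' f" and g: "morph Y Y' g"
  shows "morph (tprod X Y) (tprod X' Y') (copair (\<lambda>v. 2 * f v) (\<lambda>v. glue_map X' Y' (g v)))"
proof -
  have h1: "hom X (tprod X' Y') (\<lambda>v. 2 * f v)" using hom_comp'[OF _ hom_inj1] f by (auto simp: morph_hom)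
  have h2: "hom Y (tprod X' Y') (\<lambda>v. glue_map X' Y' (g v))" using hom_comp'[OF _ hom_inj2] g by (auto simp: morph_hom)
  have c: "2 * f (ev X) = glue_map X' Y' (g (sv Y))" using f g by (simp add: morph_def)
  show ?thesis using hom_copair[OF h1 h2 c] copair_glue[of "\<lambda>v. 2 * f v" X "\<lambda>v. glue_map X' Y' (g v)" Y, OF c] f g
    by (simp add: morph_hom)
qed

lemma hle_tprod: "hle X X' \<Longrightarrow> hle Y Y' \<Longrightarrow> hle (tprod X Y) (tprod X' Y')"
  unfolding hle_def using tprod_mono by blast

lemma heq_tprod: "heq X X' \<Longrightarrow> heq Y Y' \<Longrightarrow> heq (tprod X Y) (tprod X' Y')"
  unfolding heq_def using hle_tprod by blast

lemma wfs_tprod: "wfs X \<Longrightarrow> wfs Y \<Longrightarrow> wfs (tprod X Y)"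
  unfolding wfs_def by auto

lemma wfs_tplus: "wfs X \<Longrightarrow> wfs (tplus X)" unfolding wfs_def by auto
lemma wfs_tstar: "wfs X \<Longrightarrow> wfs (tstar X)" unfolding wfs_def by auto

lemma morph_tplus: "morph X Y f \<Longrightarrow> morph (tplus X) (tplus Y) f"
  by (simp add: morph_def)
lemma morph_tstar: "morph X Y f \<Longrightarrow> morph (tstar X) (tstar Y) f"
  by (simp add: morph_def)
lemma heq_tplus: "heq X Y \<Longrightarrow> heq (tplus X) (tplus Y)"
  unfolding heq_def hle_def using morph_tplus by blast
lemma heq_tstar: "heq X Y \<Longrightarrow> heq (tstar X) (tstar Y)"
  unfolding heq_def hle_def using morph_tstar by blast

lemma assoc1: "hle (tprod (tprod X Y) Z) (tprod X (tprod Y Z))"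
proof -
  let ?YZ = "tprod Y Z" and ?T = "tprod X (tprod Y Z)"
  let ?a = "\<lambda>v. 2 * v" and ?b = "\<lambda>v. glue_map X ?YZ (2 * v)" and ?c = "\<lambda>v. glue_map X ?YZ (glue_map Y Z v)"
  have ha: "hom X ?T ?a" by (rule hom_inj1)
  have hb: "hom Y ?T ?b" by (rule hom_comp'[OF hom_inj1 hom_inj2])
  have hc: "hom Z ?T ?c" by (rule hom_comp'[OF hom_inj2 hom_inj2])
  have c1: "?a (ev X) = ?b (sv Y)" by (simp add: glue_map_def)
  have hab: "hom (tprod X Y) ?T (copair ?a ?b)" by (rule hom_copair[OF ha hb c1])
  have c2: "copair ?a ?b (ev (tprod X Y)) = ?c (sv Z)"
    using copair_glue[of ?a X ?b Y, OF c1] by simp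
  have h: "hom (tprod (tprod X Y) Z) ?T (copair (copair ?a ?b) ?c)" by (rule hom_copair[OF hab hc c2])
  have s: "copair (copair ?a ?b) ?c (sv (tprod (tprod X Y) Z)) = sv ?T" by simp
  have e: "copair (copair ?a ?b) ?c (ev (tprod (tprod X Y) Z)) = ev ?T"
    using copair_glue[of "copair ?a ?b" "tprod X Y" ?c Z, OF c2] by simp
  show ?thesis unfolding hle_def morph_hom using h s e by blast
qed

lemma assoc2: "hle (tprod X (tprod Y Z)) (tprod (tprod X Y) Z)"
proof -
  let ?XY = "tprod X Y" and ?T = "tprod (tprod X Y) Z"
  let ?a = "\<lambda>v. 2 * (2 * v)" and ?b = "\<lambda>v. 2 * glue_map X Y v" and ?c = "glue_map ?XY Z"
  have ha: "hom X ?T ?a" by (rule hom_comp'[OF hom_inj1 hom_inj1])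
  have hb: "hom Y ?T ?b" by (rule hom_comp'[OF hom_inj2 hom_inj1])
  have hc: "hom Z ?T ?c" by (rule hom_inj2)
  have c1: "?b (ev Y) = ?c (sv Z)" by simp
  have hbc: "hom (tprod Y Z) ?T (copair ?b ?c)" by (rule hom_copair[OF hb hc c1])
  have c2: "?a (ev X) = copair ?b ?c (sv (tprod Y Z))" by simp
  have h: "hom (tprod X (tprod Y Z)) ?T (copair ?a (copair ?b ?c))" by (rule hom_copair[OF ha hbc c2])
  have s: "copair ?a (copair ?b ?c) (sv (tprod X (tprod Y Z))) = sv ?T" by simp
  have e: "copair ?a (copair ?b ?c) (ev (tprod X (tprod Y Z))) = ev ?T"
    using copair_glue[of ?a X "copair ?b ?c" "tprod Y Z", OF c2] copair_glue[of ?b Y ?c Z, OF c1] by simp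
  show ?thesis unfolding hle_def morph_hom using h s e by blast
qed

lemma heq_assoc: "heq (tprod (tprod X Y) Z) (tprod X (tprod Y Z))"
  by (simp add: heq_def assoc1 assoc2)

definition U :: "'a stree" where
  "U = \<lparr>verts = {0}, edges = {}, sv = 0, ev = 0\<rparr>"

lemma U_simps[simp]: "verts U = {0}" "edges U = {}" "sv U = 0" "ev U = 0"
  by (simp_all add: U_def)

lemma hom_const: "c \<in> verts A \<Longrightarrow> hom U A (\<lambda>_. c)"
  by (simp add: hom_def)

lemma hom_id: "hom A A (\<lambda>v. v)"
  by (auto simp: hom_def edge_map_def split: prod.splits)

lemma heq_unit_left: "wfs A \<Longrightarrow> heq (tprod U A) A"
proof -
  assume w: "wfs A"
  have m1: "morph A (tprod U A) (glue_map U A)"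
    using hom_inj2[of A U] by (simp add: morph_hom)
  have c: "(\<lambda>_. sv A) (ev U) = (\<lambda>v. v) (sv A)" by simp
  have h: "hom (tprod U A) A (copair (\<lambda>_. sv A) (\<lambda>v. v))"
    using hom_copair[OF hom_const hom_id c] w by (simp add: wfs_def)
  have m2: "morph (tprod U A) A (copair (\<lambda>_. sv A) (\<lambda>v. v))"
    using h copair_glue[of "\<lambda>_. sv A" U "\<lambda>v. v" A, OF c] by (simp add: morph_hom)
  show ?thesis using m1 m2 unfolding heq_def hle_def by blast
qed

lemma heq_unit_right: "wfs A \<Longrightarrow> heq (tprod A U) A"
proof -
  assume w: "wfs A"
  have m1: "morph A (tprod A U) (\<lambda>v. 2 * v)"
    using hom_inj1[of A U] by (simp add: morph_hom glue_map_def)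
  have c: "(\<lambda>v. v) (ev A) = (\<lambda>_. ev A) (sv U)" by simp
  have h: "hom (tprod A U) A (copair (\<lambda>v. v) (\<lambda>_. ev A))"
    using hom_copair[OF hom_id hom_const c] w by (simp add: wfs_def)
  have m2: "morph (tprod A U) A (copair (\<lambda>v. v) (\<lambda>_. ev A))"
    using h copair_glue[of "\<lambda>v. v" A "\<lambda>_. ev A" U, OF c] by (simp add: morph_hom)
  show ?thesis using m1 m2 unfolding heq_def hle_def by blast
qed

lemma heq_plus_left: "heq (tprod (tplus A) A) A"
proof -
  have m1: "morph A (tprod (tplus A) A) (glue_map (tplus A) A)"
    using hom_inj2[of A "tplus A"] by (simp add: morph_hom)
  have c: "(\<lambda>v. v) (ev (tplus A)) = (\<lambda>v. v) (sv A)" by simp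
  have h: "hom (tprod (tplus A) A) A (copair (\<lambda>v. v) (\<lambda>v. v))"
    using hom_copair[where A="tplus A" and W=A and f="\<lambda>v. v" and B=A and g="\<lambda>v. v", OF _ hom_id c] hom_id[of A] by (simp add: hom_def)
  have m2: "morph (tprod (tplus A) A) A (copair (\<lambda>v. v) (\<lambda>v. v))"
    using h copair_glue[of "\<lambda>v. v" "tplus A" "\<lambda>v. v" A, OF c] by (simp add: morph_hom)
  show ?thesis using m1 m2 unfolding heq_def hle_def by blast
qed

lemma heq_star_right: "heq (tprod A (tstar A)) A"
proof -
  have m1: "morph A (tprod A (tstar A)) (\<lambda>v. 2 * v)"
    using hom_inj1[of A "tstar A"] by (simp add: morph_hom glue_map_def)
  have c: "(\<lambda>v. v) (ev A) = (\<lambda>v. v) (sv (tstar A))" by simp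
  have h: "hom (tprod A (tstar A)) A (copair (\<lambda>v. v) (\<lambda>v. v))"
    using hom_copair[where A=A and W=A and f="\<lambda>v. v" and B="tstar A" and g="\<lambda>v. v", OF hom_id _ c] hom_id[of A] by (simp add: hom_def)
  have m2: "morph (tprod A (tstar A)) A (copair (\<lambda>v. v) (\<lambda>v. v))"
    using h copair_glue[of "\<lambda>v. v" A "\<lambda>v. v" "tstar A", OF c] by (simp add: morph_hom)
  show ?thesis using m1 m2 unfolding heq_def hle_def by blast
qed

lemma proj_idem: "sv Z = ev Z \<Longrightarrow> heq (tprod Z Z) Z"
proof -
  assume se: "sv Z = ev Z"
  have m1: "morph Z (tprod Z Z) (\<lambda>v. 2 * v)"
    using hom_inj1[of Z Z] se by (simp add: morph_hom glue_map_def)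
  have c: "(\<lambda>v. v) (ev Z) = (\<lambda>v. v) (sv Z)" using se by simp
  have h: "hom (tprod Z Z) Z (copair (\<lambda>v. v) (\<lambda>v. v))"
    using hom_copair[OF hom_id hom_id c] .
  have m2: "morph (tprod Z Z) Z (copair (\<lambda>v. v) (\<lambda>v. v))"
    using h copair_glue[of "\<lambda>v. v" Z "\<lambda>v. v" Z, OF c] by (simp add: morph_hom)
  show ?thesis using m1 m2 unfolding heq_def hle_def by blast
qed

lemma proj_comm1: "sv X = ev X \<Longrightarrow> sv Y = ev Y \<Longrightarrow> hle (tprod X Y) (tprod Y X)"
proof -
  assume sx: "sv X = ev X" and sy: "sv Y = ev Y"
  let ?f = "glue_map Y X" and ?g = "\<lambda>v. 2 * v"
  have c: "?f (ev X) = ?g (sv Y)" using sx sy by (simp add: glue_map_def)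
  have h: "hom (tprod X Y) (tprod Y X) (copair ?f ?g)"
    using hom_copair[OF hom_inj2 hom_inj1 c] .
  have "morph (tprod X Y) (tprod Y X) (copair ?f ?g)"
    using h copair_glue[of ?f X ?g Y, OF c] sx sy by (simp add: morph_hom glue_map_def)
  then show ?thesis unfolding hle_def by blast
qed

lemma proj_comm: "sv X = ev X \<Longrightarrow> sv Y = ev Y \<Longrightarrow> heq (tprod X Y) (tprod Y X)"
  by (simp add: heq_def proj_comm1)

lemma glue_tplus: "glue_map A (tplus X) = glue_map A X"
  by (simp add: glue_map_def fun_eq_iff)

lemma glue_tstar: "glue_map (tstar X) P = glue_map X P"
  by (simp add: glue_map_def fun_eq_iff)

lemma tprod_tplus_simps:
  "verts (tprod A (tplus X)) = verts (tprod A X)"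
  "edges (tprod A (tplus X)) = edges (tprod A X)"
  "sv (tprod A (tplus X)) = sv (tprod A X)"
  "ev (tprod A (tplus X)) = 2 * ev A"
  by (simp_all add: glue_tplus)

lemma tprod_tstar_simps:
  "verts (tprod (tstar X) P) = verts (tprod X P)"
  "edges (tprod (tstar X) P) = edges (tprod X P)"
  "sv (tprod (tstar X) P) = 2 * ev X"
  "ev (tprod (tstar X) P) = ev (tprod X P)"
  by (simp_all add: glue_tstar)




definition walk :: "(nat \<times> 'a \<times> nat) set \<Rightarrow> (nat \<Rightarrow> nat) \<Rightarrow> nat \<Rightarrow> bool" where
  "walk E p n \<longleftrightarrow> (\<forall>i<n. \<exists>a. (p i, a, p (Suc i)) \<in> E)"

definition haswalk :: "'a stree \<Rightarrow> nat \<Rightarrow> bool" where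
  "haswalk X n \<longleftrightarrow> (\<exists>p. p 0 = sv X \<and> p n = ev X \<and> walk (edges X) p n)"

definition pot :: "(nat \<times> 'a \<times> nat) set \<Rightarrow> (nat \<Rightarrow> int) \<Rightarrow> bool" where
  "pot E \<phi> \<longleftrightarrow> (\<forall>(u, a, v) \<in> E. \<phi> v = \<phi> u + 1)"

lemma walk_pot: "walk E p n \<Longrightarrow> pot E \<phi> \<Longrightarrow> i \<le> n \<Longrightarrow> \<phi> (p i) = \<phi> (p 0) + int i"
proof (induction i)
  case 0 then show ?case by simp
next
  case (Suc i)
  then have "i < n" by simp
  then obtain a where "(p i, a, p (Suc i)) \<in> E" using Suc.prems(1) unfolding walk_def by blast
  then have "\<phi> (p (Suc i)) = \<phi> (p i) + 1" using Suc.prems(2) by (auto simp: pot_def)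
  then show ?case using Suc by simp
qed

lemma walk_hom: "walk (edges X) p n \<Longrightarrow> hom X Y f \<Longrightarrow> walk (edges Y) (\<lambda>i. f (p i)) n"
  unfolding walk_def hom_def by (metis edge_map_simp)

lemma rtrancl_walk: "(u, v) \<in> (dgraph X)\<^sup>* \<Longrightarrow> \<exists>n p. p 0 = u \<and> p n = v \<and> walk (edges X) p n"
proof (induction rule: rtrancl_induct)
  case base
  then show ?case by (rule exI[of _ 0], rule exI[of _ "\<lambda>_. u"]) (simp add: walk_def)
next
  case (step v w)
  then obtain n p where p: "p 0 = u" "p n = v" "walk (edges X) p n" by blast
  obtain a where a: "(v, a, w) \<in> edges X" using step(2) by (auto simp: dgraph_def)
  let ?q = "p(Suc n := w)"
  have "walk (edges X) ?q (Suc n)"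
    unfolding walk_def
  proof (intro allI impI)
    fix i assume "i < Suc n"
    then consider "i < n" | "i = n" by linarith
    then show "\<exists>b. (?q i, b, ?q (Suc i)) \<in> edges X"
    proof cases
      case 1 then show ?thesis using p(3) by (auto simp: walk_def)
    next
      case 2 then show ?thesis using a p(2) by auto
    qed
  qed
  moreover have "?q 0 = u" "?q (Suc n) = w" using p by auto
  ultimately show ?case by blast
qed

lemma tree_haswalk: "is_tree S X \<Longrightarrow> \<exists>n. haswalk X n"
  unfolding haswalk_def is_tree_def using rtrancl_walk by blast

lemma walk_concat:
  assumes "haswalk A nA" "haswalk X nX"
  shows "\<exists>q. q 0 = sv (tprod A X) \<and> q (nA + nX) = ev (tprod A X) \<and> q nA = 2 * ev A
             \<and> walk (edges (tprod A X)) q (nA + nX)"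
proof -
  obtain pA where pA: "pA 0 = sv A" "pA nA = ev A" "walk (edges A) pA nA" using assms(1) by (auto simp: haswalk_def)
  obtain pX where pX: "pX 0 = sv X" "pX nX = ev X" "walk (edges X) pX nX" using assms(2) by (auto simp: haswalk_def)
  define q where "q i = (if i \<le> nA then 2 * pA i else glue_map A X (pX (i - nA)))" for i
  have q2: "q i = glue_map A X (pX (i - nA))" if "i \<ge> nA" for i
    using that pA(2) pX(1) by (cases "i = nA") (auto simp: q_def)
  have w: "walk (edges (tprod A X)) q (nA + nX)"
    unfolding walk_def
  proof (intro allI impI)
    fix i assume i: "i < nA + nX"
    show "\<exists>a. (q i, a, q (Suc i)) \<in> edges (tprod A X)"
    proof (cases "i < nA")
      case True
      then obtain a where "(pA i, a, pA (Suc i)) \<in> edges A" using pA(3) by (auto simp: walk_def)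
      then have "(2 * pA i, a, 2 * pA (Suc i)) \<in> edges (tprod A X)"
        unfolding tprod_simps by (intro UnI1 image_eqI[where x="(pA i, a, pA (Suc i))"]) auto
      then show ?thesis using True by (auto simp: q_def)
    next
      case False
      then have "i - nA < nX" using i by simp
      then obtain a where "(pX (i - nA), a, pX (Suc (i - nA))) \<in> edges X" using pX(3) by (auto simp: walk_def)
      then have "(glue_map A X (pX (i - nA)), a, glue_map A X (pX (Suc (i - nA)))) \<in> edges (tprod A X)"
        unfolding tprod_simps by (intro UnI2 image_eqI[where x="(pX (i - nA), a, pX (Suc (i - nA)))"]) auto
      moreover have "Suc i - nA = Suc (i - nA)" using False by simp
      ultimately show ?thesis using False q2[of i] q2[of "Suc i"] by auto
    qed
  qed
  have "q 0 = sv (tprod A X)" using pA(1) by (simp add: q_def)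
  moreover have "q (nA + nX) = ev (tprod A X)" using q2[of "nA + nX"] pX(2) by simp
  moreover have "q nA = 2 * ev A" using pA(2) by (simp add: q_def)
  ultimately show ?thesis using w by blast
qed

definition potp :: "'a stree \<Rightarrow> 'a stree \<Rightarrow> (nat \<Rightarrow> int) \<Rightarrow> (nat \<Rightarrow> int) \<Rightarrow> nat \<Rightarrow> int" where
  "potp B Y \<phi>B \<phi>Y w = (if even w then \<phi>B (w div 2) else \<phi>B (ev B) + \<phi>Y (w div 2) - \<phi>Y (sv Y))"

lemma potp_2[simp]: "potp B Y \<phi>B \<phi>Y (2 * v) = \<phi>B v"
  by (simp add: potp_def)

lemma potp_glue[simp]: "potp B Y \<phi>B \<phi>Y (glue_map B Y u) = \<phi>B (ev B) + \<phi>Y u - \<phi>Y (sv Y)"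
  by (simp add: potp_def glue_map_def)

lemma pot_tprod:
  assumes "pot (edges B) \<phi>B" "pot (edges Y) \<phi>Y"
  shows "pot (edges (tprod B Y)) (potp B Y \<phi>B \<phi>Y)"
  unfolding pot_def
proof (intro ballI)
  fix e assume "e \<in> edges (tprod B Y)"
  then consider (a) e' where "e' \<in> edges B" "e = edge_map (\<lambda>v. 2*v) e'"
    | (b) e' where "e' \<in> edges Y" "e = edge_map (glue_map B Y) e'" by auto
  then show "case e of (u, a, v) \<Rightarrow> potp B Y \<phi>B \<phi>Y v = potp B Y \<phi>B \<phi>Y u + 1"
  proof cases
    case a then show ?thesis using assms(1) by (cases e') (auto simp: pot_def)
  next
    case b then show ?thesis using assms(2) by (cases e') (auto simp: pot_def)
  qed
qed

lemma crossing:
  assumes w: "walk (edges (tprod B Y)) r L" and r0: "r 0 = 2 * sv B" and rL: "r L = glue_map B Y (ev Y)"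
  shows "\<exists>i\<le>L. r i = 2 * ev B"
proof (rule ccontr)
  assume nc: "\<not> (\<exists>i\<le>L. r i = 2 * ev B)"
  have ev: "even (r i)" if "i \<le> L" for i
    using that
  proof (induction i)
    case 0 then show ?case using r0 by simp
  next
    case (Suc i)
    then have ei: "even (r i)" and ne: "r i \<noteq> 2 * ev B" using nc by auto
    have "i < L" using Suc.prems by simp
    then obtain a where "(r i, a, r (Suc i)) \<in> edges (tprod B Y)" using w unfolding walk_def by blast
    then consider (a) e' where "(r i, a, r (Suc i)) = edge_map (\<lambda>v. 2*v) e'"
      | (b) e' where "(r i, a, r (Suc i)) = edge_map (glue_map B Y) e'" by auto
    then show ?case
    proof cases
      case a then show ?thesis by (cases e') auto
    next
      case b
      obtain u b' v where "e' = (u, b', v)" by (cases e') auto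
      then have "r i = glue_map B Y u" using b by simp
      then show ?thesis using ei ne by (auto simp: glue_map_def split: if_splits)
    qed
  qed
  have "even (r L)" using ev by simp
  then have "r L = 2 * ev B" using rL by (auto simp: glue_map_def split: if_splits)
  then show False using nc by blast
qed

lemma glue_point:
  assumes f: "morph (tprod A X) (tprod B Y) f"
    and wA: "haswalk A nA" and wX: "haswalk X nX"
    and pB: "pot (edges B) \<phi>B" and pY: "pot (edges Y) \<phi>Y"
    and d: "int nA = \<phi>B (ev B) - \<phi>B (sv B) \<or> int nX = \<phi>Y (ev Y) - \<phi>Y (sv Y)"
  shows "f (2 * ev A) = 2 * ev B"
proof -
  obtain q where q: "q 0 = sv (tprod A X)" "q (nA + nX) = ev (tprod A X)" "q nA = 2 * ev A"
    "walk (edges (tprod A X)) q (nA + nX)" using walk_concat[OF wA wX] by blast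
  let ?r = "\<lambda>i. f (q i)" and ?L = "nA + nX" and ?\<psi> = "potp B Y \<phi>B \<phi>Y"
  have hf: "hom (tprod A X) (tprod B Y) f" using f by (simp add: morph_hom)
  have wr: "walk (edges (tprod B Y)) ?r ?L" using walk_hom[OF q(4) hf] .
  have r0: "?r 0 = 2 * sv B" using q(1) f by (simp add: morph_def)
  have rL: "?r ?L = glue_map B Y (ev Y)" using q(2) f by (simp add: morph_def)
  have pt: "pot (edges (tprod B Y)) ?\<psi>" using pot_tprod[OF pB pY] .
  have "?\<psi> (?r ?L) = ?\<psi> (?r 0) + int ?L" using walk_pot[OF wr pt le_refl] by (simp only:)
  then have L: "int ?L = (\<phi>B (ev B) - \<phi>B (sv B)) + (\<phi>Y (ev Y) - \<phi>Y (sv Y))" using r0 rL by simp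
  obtain i where i: "i \<le> ?L" "?r i = 2 * ev B" using crossing[OF wr r0 rL] by blast
  have "?\<psi> (?r i) = ?\<psi> (?r 0) + int i" using walk_pot[OF wr pt i(1)] .
  then have "int i = \<phi>B (ev B) - \<phi>B (sv B)" using i(2) r0 by simp
  then have "i = nA" using d L by linarith
  then show ?thesis using i(2) q(3) by simp
qed

lemma idem_proj:
  assumes h: "hle (tprod X X) X" and wX: "haswalk X n" and pX: "pot (edges X) \<phi>"
  shows "sv X = ev X"
proof -
  obtain f where f: "morph (tprod X X) X f" using h by (auto simp: hle_def)
  obtain q where q: "q 0 = sv (tprod X X)" "q (n + n) = ev (tprod X X)"
    "walk (edges (tprod X X)) q (n + n)" using walk_concat[OF wX wX] by blast
  have hf: "hom (tprod X X) X f" using f by (simp add: morph_hom)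
  have wr: "walk (edges X) (\<lambda>i. f (q i)) (n + n)" using walk_hom[OF q(3) hf] .
  have "\<phi> (f (q (n+n))) = \<phi> (f (q 0)) + int (n + n)" using walk_pot[OF wr pX le_refl] by (simp only:)
  then have 1: "\<phi> (ev X) = \<phi> (sv X) + int (n + n)" using q f by (simp add: morph_def)
  obtain p where p: "p 0 = sv X" "p n = ev X" "walk (edges X) p n" using wX by (auto simp: haswalk_def)
  have "\<phi> (p n) = \<phi> (p 0) + int n" using walk_pot[OF p(3) pX le_refl] .
  then have "n = 0" using 1 p by simp
  then show ?thesis using p by simp
qed




definition ugE :: "(nat \<times> 'a \<times> nat) set \<Rightarrow> (nat \<times> nat) set" where
  "ugE E = {(u, v). \<exists>a. (u, a, v) \<in> E \<or> (v, a, u) \<in> E}"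

lemma sum_card_partition:
  assumes "finite V" "finite E" "\<forall>e\<in>E. h e \<in> V"
  shows "(\<Sum>v\<in>V. card {e\<in>E. h e = v}) = card E"
proof -
  have "E = (\<Union>v\<in>V. {e\<in>E. h e = v})" using assms(3) by auto
  moreover have "card (\<Union>v\<in>V. {e\<in>E. h e = v}) = (\<Sum>v\<in>V. card {e\<in>E. h e = v})"
    by (rule card_UN_disjoint) (use assms in auto)
  ultimately show ?thesis by simp
qed

lemma pot_exists:
  "card V = n \<Longrightarrow> finite V \<Longrightarrow> finite E \<Longrightarrow> (\<forall>(u, a, v)\<in>E. u \<in> V \<and> v \<in> V) \<Longrightarrow>
   card E + 1 = card V \<Longrightarrow> (\<forall>u\<in>V. \<forall>v\<in>V. (u, v) \<in> (ugE E)\<^sup>*) \<Longrightarrow> \<exists>\<phi>. pot E \<phi>"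
proof (induction n arbitrary: V E)
  case 0 then show ?case by simp
next
  case (Suc n)
  note fin = Suc.prems(2,3) and inV = Suc.prems(4) and cE = Suc.prems(5) and conn = Suc.prems(6)
  show ?case
  proof (cases "E = {}")
    case True then show ?thesis by (auto simp: pot_def)
  next
    case False
    define Out where "Out v = {e\<in>E. fst e = v}" for v
    define In where "In v = {e\<in>E. snd (snd e) = v}" for v
    have s1: "(\<Sum>v\<in>V. card (Out v)) = card E" unfolding Out_def
      by (rule sum_card_partition) (use fin inV in auto)
    have s2: "(\<Sum>v\<in>V. card (In v)) = card E" unfolding In_def
      by (rule sum_card_partition) (use fin inV in auto)
    have "\<exists>l\<in>V. card (Out l) + card (In l) < 2"
    proof (rule ccontr)
      assume "\<not> ?thesis"
      then have "\<forall>v\<in>V. 2 \<le> card (Out v) + card (In v)" by auto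
      then have "(\<Sum>v\<in>V. (2::nat)) \<le> (\<Sum>v\<in>V. card (Out v) + card (In v))" by (intro sum_mono) blast
      then have "2 * card V \<le> card E + card E" using s1 s2 by (simp add: sum.distrib)
      then show False using cE by simp
    qed
    then obtain l where lV: "l \<in> V" and dl: "card (Out l) + card (In l) < 2" by blast
    have cE1: "card E \<ge> 1" using False fin by (simp add: Suc_le_eq card_gt_0_iff)
    then have "card V \<ge> 2" using cE by simp
    then have "card (V - {l}) \<ge> 1" using lV fin(1) by simp
    then have "V - {l} \<noteq> {}" by (metis card.empty not_one_le_zero)
    then obtain w where w: "w \<in> V" "w \<noteq> l" by blast
    have "(l, w) \<in> (ugE E)\<^sup>*" using conn lV w by blast
    then obtain x where "(l, x) \<in> ugE E" using w(2) by (metis converse_rtranclE)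
    then obtain a where "(l, a, x) \<in> E \<or> (x, a, l) \<in> E" by (auto simp: ugE_def)
    define I where "I = {e\<in>E. fst e = l \<or> snd (snd e) = l}"
    have IOI: "I = Out l \<union> In l" by (auto simp: I_def Out_def In_def)
    have finI: "finite (Out l)" "finite (In l)" "finite I" using fin by (auto simp: Out_def In_def I_def)
    have "I \<noteq> {}" using \<open>(l, a, x) \<in> E \<or> (x, a, l) \<in> E\<close> by (force simp: I_def)
    moreover have "card I \<le> 1" using card_Un_le[of "Out l" "In l"] dl IOI by simp
    ultimately have "card I = 1" using finI(3) card_gt_0_iff[of I] by linarith
    then obtain e0 where I1: "I = {e0}" by (rule card_1_singletonE)
    obtain s b t where e0: "e0 = (s, b, t)" by (cases e0) auto
    have e0E: "e0 \<in> E" using I1 by (auto simp: I_def)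
    have "e0 \<in> I" using I1 by simp
    then have "fst e0 = l \<or> snd (snd e0) = l" by (simp add: I_def)
    then have st: "s = l \<or> t = l" using e0 by simp
    have noloop: "\<not> (s = l \<and> t = l)"
    proof
      assume "s = l \<and> t = l"
      then have "e0 \<in> Out l" "e0 \<in> In l" using e0E e0 by (auto simp: Out_def In_def)
      then have "card (Out l) \<ge> 1" "card (In l) \<ge> 1" using finI by (auto simp: Suc_le_eq card_gt_0_iff)
      then show False using dl by simp
    qed
    define m where "m = (if s = l then t else s)"
    have ml: "m \<noteq> l" using st noloop by (auto simp: m_def)
    have mV: "m \<in> V" using inV e0E e0 by (auto simp: m_def)
    have inc: "(x, c, y) = e0" if "(x, c, y) \<in> E" "x = l \<or> y = l" for x y c
    proof -
      have "(x, c, y) \<in> I" using that unfolding I_def by auto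
      then show ?thesis using I1 by simp
    qed
    define V' where "V' = V - {l}"
    define E' where "E' = E - {e0}"
    have E'l: "\<And>x c y. (x, c, y) \<in> E' \<Longrightarrow> x \<noteq> l \<and> y \<noteq> l" using inc by (auto simp: E'_def)
    have cV': "card V' = n" using Suc.prems(1) lV fin by (simp add: V'_def)
    have cE': "card E' + 1 = card V'" using cE cE1 e0E fin lV by (simp add: E'_def V'_def)
    have inV': "\<forall>(u, a, v)\<in>E'. u \<in> V' \<and> v \<in> V'" using inV E'l by (auto simp: V'_def E'_def)
    have step1: "(x, y) \<in> ugE E \<Longrightarrow> x = l \<or> y = l \<Longrightarrow> (x = l \<and> y = m) \<or> (x = m \<and> y = l)" for x y
    proof -
      assume "(x, y) \<in> ugE E" "x = l \<or> y = l"
      then obtain c where "(x, c, y) \<in> E \<or> (y, c, x) \<in> E" by (auto simp: ugE_def)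
      then have "(x, c, y) = e0 \<or> (y, c, x) = e0" using inc \<open>x = l \<or> y = l\<close> by blast
      then show ?thesis using e0 st noloop by (auto simp: m_def)
    qed
    have step2: "(x, y) \<in> ugE E \<Longrightarrow> x \<noteq> l \<Longrightarrow> y \<noteq> l \<Longrightarrow> (x, y) \<in> ugE E'" for x y
    proof -
      assume "(x, y) \<in> ugE E" "x \<noteq> l" "y \<noteq> l"
      then obtain c where c: "(x, c, y) \<in> E \<or> (y, c, x) \<in> E" by (auto simp: ugE_def)
      have "(x, c, y) \<noteq> e0" "(y, c, x) \<noteq> e0" using e0 st \<open>x \<noteq> l\<close> \<open>y \<noteq> l\<close> by auto
      then show ?thesis using c by (auto simp: ugE_def E'_def)
    qed
    have reach: "(u, v) \<in> (ugE E)\<^sup>* \<Longrightarrow> u \<noteq> l \<Longrightarrow>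
        (v \<noteq> l \<longrightarrow> (u, v) \<in> (ugE E')\<^sup>*) \<and> (v = l \<longrightarrow> (u, m) \<in> (ugE E')\<^sup>*)" for u v
    proof (induction rule: rtrancl_induct)
      case base then show ?case by simp
    next
      case (step v w)
      show ?case
      proof (cases "w = l")
        case True
        then have "v = m" using step1[OF step(2)] by auto
        then show ?thesis using step.IH step.prems ml True by auto
      next
        case wl: False
        show ?thesis
        proof (cases "v = l")
          case True
          then have "w = m" using step1[OF step(2)] by auto
          then show ?thesis using step.IH step.prems True wl by auto
        next
          case False
          have "(v, w) \<in> ugE E'" by (rule step2[OF step(2) False wl])
          then show ?thesis using step.IH step.prems False wl by (meson rtrancl.rtrancl_into_rtrancl)
        qed
      qed
    qed
    have conn': "\<forall>u\<in>V'. \<forall>v\<in>V'. (u, v) \<in> (ugE E')\<^sup>*"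
      using reach conn by (auto simp: V'_def)
    obtain \<phi>' where p': "pot E' \<phi>'"
      using Suc.IH[OF cV' _ _ inV' cE' conn'] fin by (auto simp: V'_def E'_def)
    define \<phi> where "\<phi> = \<phi>'(l := (if s = l then \<phi>' t - 1 else \<phi>' s + 1))"
    have "pot E \<phi>"
      unfolding pot_def
    proof (intro ballI)
      fix e assume eE: "e \<in> E"
      obtain u c v where e: "e = (u, c, v)" by (cases e) auto
      show "case e of (u, a, v) \<Rightarrow> \<phi> v = \<phi> u + 1"
      proof (cases "e = e0")
        case True
        then show ?thesis using e e0 st noloop by (auto simp: \<phi>_def)
      next
        case False
        then have "e \<in> E'" using eE by (simp add: E'_def)
        then show ?thesis using E'l p' e by (auto simp: \<phi>_def pot_def)
      qed
    qed
    then show ?thesis by blast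
  qed
qed

lemma tree_pot: "is_tree S X \<Longrightarrow> \<exists>\<phi>. pot (edges X) \<phi>"
proof -
  assume t: "is_tree S X"
  have u: "ugraph X = ugE (edges X)" by (auto simp: ugraph_def dgraph_def ugE_def)
  have a: "finite (verts X)" "finite (edges X)" "\<forall>(u, a, v)\<in>edges X. u \<in> verts X \<and> v \<in> verts X"
    "card (edges X) + 1 = card (verts X)" "\<forall>u\<in>verts X. \<forall>v\<in>verts X. (u, v) \<in> (ugraph X)\<^sup>*"
    using t unfolding is_tree_def by auto
  show ?thesis using pot_exists[OF refl a(1,2,3,4)] a(5) unfolding u by blast
qed




lemma class_char:
  assumes "is_tree S X0" "pruned X0"
  shows "iso_class S X0 = {Z. is_tree S Z \<and> pruned Z \<and> heq Z X0}"
proof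
  have w0: "wfs X0" using is_tree_wf[OF assms(1)] .
  show "iso_class S X0 \<subseteq> {Z. is_tree S Z \<and> pruned Z \<and> heq Z X0}"
    using iso_heq[OF w0] iso_pruned[OF w0 _ assms(2)] heq_sym by (auto simp: iso_class_def)
  show "{Z. is_tree S Z \<and> pruned Z \<and> heq Z X0} \<subseteq> iso_class S X0"
  proof
    fix Z assume "Z \<in> {Z. is_tree S Z \<and> pruned Z \<and> heq Z X0}"
    then have Z: "is_tree S Z" "pruned Z" "heq Z X0" by auto
    obtain f g where "morph X0 Z f" "morph Z X0 g" using Z(3) by (auto simp: heq_def hle_def)
    then have "tree_iso X0 Z"
      using pruned_heq_iso[of X0 Z f g] assms Z is_tree_wf by (auto simp: is_tree_def)
    then show "Z \<in> iso_class S X0" using Z by (simp add: iso_class_def)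
  qed
qed

lemma T1_mem:
  assumes "C \<in> T1 S" "X \<in> C"
  shows "is_tree S X \<and> pruned X \<and> C = {Z. is_tree S Z \<and> pruned Z \<and> heq Z X}"
proof -
  obtain X0 where X0: "C = iso_class S X0" "is_tree S X0" "pruned X0" using assms(1) by (auto simp: T1_def)
  have C: "C = {Z. is_tree S Z \<and> pruned Z \<and> heq Z X0}" using class_char[OF X0(2,3)] X0(1) by simp
  then have X: "is_tree S X" "pruned X" "heq X X0" using assms(2) by auto
  have "{Z. is_tree S Z \<and> pruned Z \<and> heq Z X0} = {Z. is_tree S Z \<and> pruned Z \<and> heq Z X}"
    using X(3) heq_trans heq_sym by blast
  then show ?thesis using C X by simp
qed

lemma T1_ne: "C \<in> T1 S \<Longrightarrow> \<exists>X. X \<in> C"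
  by (auto simp: T1_def iso_class_def intro: tree_iso_refl)

lemma T1_eq:
  assumes "C \<in> T1 S" "D \<in> T1 S" "X \<in> C" "Y \<in> D"
  shows "C = D \<longleftrightarrow> heq X Y"
proof
  assume "C = D"
  then show "heq X Y" using T1_mem[OF assms(2,4)] assms(3) by auto
next
  assume h: "heq X Y"
  have "C = {Z. is_tree S Z \<and> pruned Z \<and> heq Z X}" using T1_mem[OF assms(1,3)] by simp
  also have "\<dots> = {Z. is_tree S Z \<and> pruned Z \<and> heq Z Y}" using h heq_trans heq_sym by blast
  also have "\<dots> = D" using T1_mem[OF assms(2,4)] by simp
  finally show "C = D" .
qed

lemma wfs_retract: "morph X X r \<Longrightarrow> wfs X \<Longrightarrow> wfs (retract_img X r)"
proof -
  assume m: "morph X X r" and w: "wfs X"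
  have 1: "r (sv X) \<in> r ` verts X" "r (ev X) \<in> r ` verts X" using w by (auto simp: wfs_def)
  have 2: "\<forall>(u, a, v)\<in>edge_map r ` edges X. u \<in> r ` verts X \<and> v \<in> r ` verts X"
    using w by (fastforce simp: wfs_def)
  show ?thesis using 1 2 by (simp add: wfs_def retract_img_def)
qed

lemma retract_heq:
  assumes "retraction X r"
  shows "heq (retract_img X r) X"
proof -
  have m: "morph X X r" using assms by (simp add: retraction_def)
  have 1: "morph X (retract_img X r) r" using m by (auto simp: morph_def retract_img_def)
  have 2: "morph (retract_img X r) X (\<lambda>v. v)" using m by (auto simp: morph_def retract_img_def)
  show ?thesis using 1 2 by (auto simp: heq_def hle_def)
qed

lemma pruned_retract_heq:
  assumes "pruned_retract X R" "wfs X"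
  shows "heq R X \<and> wfs R"
  using assms retract_heq wfs_retract by (auto simp: pruned_retract_def retraction_def)

lemma pmult_heq:
  assumes "C \<in> T1 S" "D \<in> T1 S" "W \<in> pmult S C D" "X \<in> C" "Y \<in> D"
  shows "heq W (tprod X Y)"
proof -
  obtain X' Y' R where r: "X' \<in> C" "Y' \<in> D" "pruned_retract (tprod X' Y') R" "tree_iso R W"
    using assms(3) by (auto simp: pmult_def)
  have tX': "is_tree S X'" and tY': "is_tree S Y'" using T1_mem[OF assms(1) r(1)] T1_mem[OF assms(2) r(2)] by auto
  have "wfs (tprod X' Y')" using wfs_tprod is_tree_wf tX' tY' by blast
  then have R: "heq R (tprod X' Y')" "wfs R" using pruned_retract_heq[OF r(3)] by auto
  have "heq R W" using iso_heq[OF R(2) r(4)] .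
  moreover have "heq X X'" "heq Y Y'" using T1_mem[OF assms(1) r(1)] T1_mem[OF assms(2) r(2)] assms(4,5) by auto
  then have "heq X' X" "heq Y' Y" using heq_sym by auto
  ultimately show ?thesis using R(1) heq_tprod heq_trans heq_sym by metis
qed

lemma pplus_heq:
  assumes "C \<in> T1 S" "W \<in> pplus S C" "X \<in> C"
  shows "heq W (tplus X)"
proof -
  obtain X' R where r: "X' \<in> C" "pruned_retract (tplus X') R" "tree_iso R W"
    using assms(2) by (auto simp: pplus_def)
  have tX': "is_tree S X'" using T1_mem[OF assms(1) r(1)] by auto
  have "wfs (tplus X')" using wfs_tplus is_tree_wf tX' by blast
  then have R: "heq R (tplus X')" "wfs R" using pruned_retract_heq[OF r(2)] by auto
  have "heq R W" using iso_heq[OF R(2) r(3)] .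
  moreover have "heq X X'" using T1_mem[OF assms(1) r(1)] assms(3) by auto
  then have "heq X' X" using heq_sym by auto
  ultimately show ?thesis using R(1) heq_tplus heq_trans heq_sym by metis
qed

lemma pstar_heq:
  assumes "C \<in> T1 S" "W \<in> pstar S C" "X \<in> C"
  shows "heq W (tstar X)"
proof -
  obtain X' R where r: "X' \<in> C" "pruned_retract (tstar X') R" "tree_iso R W"
    using assms(2) by (auto simp: pstar_def)
  have tX': "is_tree S X'" using T1_mem[OF assms(1) r(1)] by auto
  have "wfs (tstar X')" using wfs_tstar is_tree_wf tX' by blast
  then have R: "heq R (tstar X')" "wfs R" using pruned_retract_heq[OF r(2)] by auto
  have "heq R W" using iso_heq[OF R(2) r(3)] .
  moreover have "heq X X'" using T1_mem[OF assms(1) r(1)] assms(3) by auto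
  then have "heq X' X" using heq_sym by auto
  ultimately show ?thesis using R(1) heq_tstar heq_trans heq_sym by metis
qed

definition good :: "'a stree \<Rightarrow> bool" where
  "good X \<longleftrightarrow> wfs X \<and> (\<exists>n. haswalk X n) \<and> (\<exists>\<phi>. pot (edges X) \<phi>)"

lemma tree_good: "is_tree S X \<Longrightarrow> good X"
  using is_tree_wf tree_haswalk tree_pot by (auto simp: good_def)

lemma U_good: "good U"
proof -
  have "haswalk U 0" by (auto simp: haswalk_def walk_def)
  moreover have "pot (edges U) (\<lambda>_. 0)" by (simp add: pot_def)
  moreover have "wfs U" by (simp add: wfs_def)
  ultimately show ?thesis by (auto simp: good_def)
qed


lemma walk_len: "haswalk A n \<Longrightarrow> pot (edges A) \<phi> \<Longrightarrow> int n = \<phi> (ev A) - \<phi> (sv A)"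
proof -
  assume "haswalk A n" "pot (edges A) \<phi>"
  then obtain p where p: "p 0 = sv A" "p n = ev A" "walk (edges A) p n" by (auto simp: haswalk_def)
  show ?thesis using walk_pot[OF p(3) \<open>pot (edges A) \<phi>\<close> le_refl] p by simp
qed

lemma plus_cancel:
  assumes "good X" "good Y" "good A" "hle (tprod X A) (tprod Y A)"
  shows "hle (tprod X (tplus A)) (tprod Y (tplus A))"
proof -
  obtain f where f: "morph (tprod X A) (tprod Y A) f" using assms(4) by (auto simp: hle_def)
  obtain nX where nX: "haswalk X nX" using assms(1) by (auto simp: good_def)
  obtain nA \<phi>A where nA: "haswalk A nA" "pot (edges A) \<phi>A" using assms(3) by (auto simp: good_def)
  obtain \<phi>Y where pY: "pot (edges Y) \<phi>Y" using assms(2) by (auto simp: good_def)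
  have "f (2 * ev X) = 2 * ev Y"
    using glue_point[OF f nX nA(1) pY nA(2)] walk_len[OF nA] by blast
  then have "morph (tprod X (tplus A)) (tprod Y (tplus A)) f"
    using f by (simp add: morph_def tprod_tplus_simps del: tprod_simps)
  then show ?thesis by (auto simp: hle_def)
qed

lemma star_cancel:
  assumes "good X" "good P" "good Q" "hle (tprod X P) (tprod X Q)"
  shows "hle (tprod (tstar X) P) (tprod (tstar X) Q)"
proof -
  obtain f where f: "morph (tprod X P) (tprod X Q) f" using assms(4) by (auto simp: hle_def)
  obtain nX \<phi>X where nX: "haswalk X nX" "pot (edges X) \<phi>X" using assms(1) by (auto simp: good_def)
  obtain nP where nP: "haswalk P nP" using assms(2) by (auto simp: good_def)
  obtain \<phi>Q where pQ: "pot (edges Q) \<phi>Q" using assms(3) by (auto simp: good_def)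
  have "f (2 * ev X) = 2 * ev X"
    using glue_point[OF f nX(1) nP nX(2) pQ] walk_len[OF nX] by blast
  then have "morph (tprod (tstar X) P) (tprod (tstar X) Q) f"
    using f by (simp add: morph_def tprod_tstar_simps del: tprod_simps)
  then show ?thesis by (auto simp: hle_def)
qed




lemma eq_heq:
  assumes "S \<subseteq> T1 \<Sigma>" "c \<in> S" "d \<in> S" "\<forall>W\<in>c. heq W T" "\<forall>W\<in>d. heq W T'"
  shows "c = d \<longleftrightarrow> heq T T'"
proof -
  have cT: "c \<in> T1 \<Sigma>" "d \<in> T1 \<Sigma>" using assms by auto
  obtain W where W: "W \<in> c" using T1_ne[OF cT(1)] by blast
  obtain W' where W': "W' \<in> d" using T1_ne[OF cT(2)] by blast
  have "c = d \<longleftrightarrow> heq W W'" using T1_eq[OF cT W W'] .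
  moreover have "heq W T" "heq W' T'" using assms(4,5) W W' by auto
  then have wT: "heq W T" and w'T: "heq W' T'" by auto
  have "heq W W' \<longleftrightarrow> heq T T'"
  proof
    assume h: "heq W W'" show "heq T T'" using heq_trans[OF heq_trans[OF heq_sym[OF wT] h] w'T] .
  next
    assume h: "heq T T'" show "heq W W'" using heq_trans[OF wT heq_trans[OF h heq_sym[OF w'T]]] .
  qed
  then show ?thesis using \<open>c = d \<longleftrightarrow> heq W W'\<close> by simp
qed

lemma mult_rep:
  assumes "S \<subseteq> T1 \<Sigma>" "closed2 S (pmult \<Sigma>)" "a \<in> S" "b \<in> S" "A \<in> a" "B \<in> b"
  shows "pmult \<Sigma> a b \<in> S \<and> (\<forall>W\<in>pmult \<Sigma> a b. heq W (tprod A B))"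
proof -
  have "a \<in> T1 \<Sigma>" "b \<in> T1 \<Sigma>" using assms by auto
  then show ?thesis using assms pmult_heq[of a \<Sigma> b _ A B] by (auto simp: closed2_def)
qed

lemma mem_tree: "S \<subseteq> T1 \<Sigma> \<Longrightarrow> a \<in> S \<Longrightarrow> A \<in> a \<Longrightarrow> is_tree \<Sigma> A"
  using T1_mem by blast

lemma mem_heq: "S \<subseteq> T1 \<Sigma> \<Longrightarrow> a \<in> S \<Longrightarrow> A \<in> a \<Longrightarrow> \<forall>W\<in>a. heq W A"
  using T1_mem by blast

lemma lrep:
  assumes S: "S \<subseteq> T1 \<Sigma>" "closed2 S (pmult \<Sigma>)" and x: "x \<in> S1 S"
  shows "\<exists>X. good X \<and> (\<forall>a\<in>S. \<forall>A\<in>a. lmul1 (pmult \<Sigma>) x a \<in> S \<and>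
            (\<forall>W\<in>lmul1 (pmult \<Sigma>) x a. heq W (tprod X A)))"
proof (cases x)
  case None
  have "\<forall>a\<in>S. \<forall>A\<in>a. lmul1 (pmult \<Sigma>) x a \<in> S \<and> (\<forall>W\<in>lmul1 (pmult \<Sigma>) x a. heq W (tprod U A))"
  proof (intro ballI, intro conjI)
    fix a A assume a: "a \<in> S" "A \<in> a"
    show "lmul1 (pmult \<Sigma>) x a \<in> S" using a None by (simp add: lmul1_def)
    have "heq A (tprod U A)" using heq_sym[OF heq_unit_left[OF is_tree_wf[OF mem_tree[OF S(1) a]]]] .
    then show "\<forall>W\<in>lmul1 (pmult \<Sigma>) x a. heq W (tprod U A)"
    proof (intro ballI)
      fix W assume "W \<in> lmul1 (pmult \<Sigma>) x a"
      then have "W \<in> a" using None by (simp add: lmul1_def)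
      then have "heq W A" using mem_heq[OF S(1) a] by blast
      then show "heq W (tprod U A)" using heq_trans \<open>heq A (tprod U A)\<close> by blast
    qed
  qed
  then show ?thesis using U_good by blast
next
  case (Some c)
  then have c: "c \<in> S" using x by (auto simp: S1_def)
  then obtain X where X: "X \<in> c" using T1_ne S(1) by blast
  have "good X" using tree_good[OF mem_tree[OF S(1) c X]] .
  moreover have "\<forall>a\<in>S. \<forall>A\<in>a. lmul1 (pmult \<Sigma>) x a \<in> S \<and> (\<forall>W\<in>lmul1 (pmult \<Sigma>) x a. heq W (tprod X A))"
  proof (intro ballI)
    fix a A assume "a \<in> S" "A \<in> a"
    then show "lmul1 (pmult \<Sigma>) x a \<in> S \<and> (\<forall>W\<in>lmul1 (pmult \<Sigma>) x a. heq W (tprod X A))"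
      using mult_rep[OF S c \<open>a \<in> S\<close> X \<open>A \<in> a\<close>] Some by (simp add: lmul1_def)
  qed
  ultimately show ?thesis by blast
qed

lemma rrep:
  assumes S: "S \<subseteq> T1 \<Sigma>" "closed2 S (pmult \<Sigma>)" and x: "x \<in> S1 S"
  shows "\<exists>X. good X \<and> (\<forall>a\<in>S. \<forall>A\<in>a. rmul1 (pmult \<Sigma>) a x \<in> S \<and>
            (\<forall>W\<in>rmul1 (pmult \<Sigma>) a x. heq W (tprod A X)))"
proof (cases x)
  case None
  have "\<forall>a\<in>S. \<forall>A\<in>a. rmul1 (pmult \<Sigma>) a x \<in> S \<and> (\<forall>W\<in>rmul1 (pmult \<Sigma>) a x. heq W (tprod A U))"
  proof (intro ballI, intro conjI)
    fix a A assume a: "a \<in> S" "A \<in> a"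
    show "rmul1 (pmult \<Sigma>) a x \<in> S" using a None by (simp add: rmul1_def)
    have "heq A (tprod A U)" using heq_sym[OF heq_unit_right[OF is_tree_wf[OF mem_tree[OF S(1) a]]]] .
    then show "\<forall>W\<in>rmul1 (pmult \<Sigma>) a x. heq W (tprod A U)"
    proof (intro ballI)
      fix W assume "W \<in> rmul1 (pmult \<Sigma>) a x"
      then have "W \<in> a" using None by (simp add: rmul1_def)
      then have "heq W A" using mem_heq[OF S(1) a] by blast
      then show "heq W (tprod A U)" using heq_trans \<open>heq A (tprod A U)\<close> by blast
    qed
  qed
  then show ?thesis using U_good by blast
next
  case (Some c)
  then have c: "c \<in> S" using x by (auto simp: S1_def)
  then obtain X where X: "X \<in> c" using T1_ne S(1) by blast
  have "good X" using tree_good[OF mem_tree[OF S(1) c X]] .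
  moreover have "\<forall>a\<in>S. \<forall>A\<in>a. rmul1 (pmult \<Sigma>) a x \<in> S \<and> (\<forall>W\<in>rmul1 (pmult \<Sigma>) a x. heq W (tprod A X))"
  proof (intro ballI)
    fix a A assume "a \<in> S" "A \<in> a"
    then show "rmul1 (pmult \<Sigma>) a x \<in> S \<and> (\<forall>W\<in>rmul1 (pmult \<Sigma>) a x. heq W (tprod A X))"
      using mult_rep[OF S \<open>a \<in> S\<close> c \<open>A \<in> a\<close> X] Some by (simp add: rmul1_def)
  qed
  ultimately show ?thesis by blast
qed

lemma heq_tprod_l: "heq Y Y' \<Longrightarrow> heq (tprod X Y) (tprod X Y')"
  using heq_tprod heq_refl by blast
lemma heq_tprod_r: "heq X X' \<Longrightarrow> heq (tprod X Y) (tprod X' Y)"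
  using heq_tprod heq_refl by blast

lemma plus_equiv:
  assumes "good X" "good Y" "good A"
  shows "heq (tprod X (tplus A)) (tprod Y (tplus A)) \<longleftrightarrow> heq (tprod X A) (tprod Y A)"
proof
  assume h: "heq (tprod X (tplus A)) (tprod Y (tplus A))"
  have 1: "heq (tprod X A) (tprod (tprod X (tplus A)) A)"
    using heq_trans[OF heq_tprod_l[OF heq_sym[OF heq_plus_left[of A]]] heq_sym[OF heq_assoc]] .
  have 2: "heq (tprod Y A) (tprod (tprod Y (tplus A)) A)"
    using heq_trans[OF heq_tprod_l[OF heq_sym[OF heq_plus_left[of A]]] heq_sym[OF heq_assoc]] .
  show "heq (tprod X A) (tprod Y A)" using heq_trans[OF 1 heq_trans[OF heq_tprod_r[OF h] heq_sym[OF 2]]] .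
next
  assume h: "heq (tprod X A) (tprod Y A)"
  then show "heq (tprod X (tplus A)) (tprod Y (tplus A))"
    using plus_cancel assms by (auto simp: heq_def)
qed

lemma star_equiv:
  assumes "good A" "good P" "good Q"
  shows "heq (tprod (tstar A) P) (tprod (tstar A) Q) \<longleftrightarrow> heq (tprod A P) (tprod A Q)"
proof
  assume h: "heq (tprod (tstar A) P) (tprod (tstar A) Q)"
  have 1: "heq (tprod A P) (tprod A (tprod (tstar A) P))"
    using heq_trans[OF heq_tprod_r[OF heq_sym[OF heq_star_right[of A]]] heq_assoc] .
  have 2: "heq (tprod A Q) (tprod A (tprod (tstar A) Q))"
    using heq_trans[OF heq_tprod_r[OF heq_sym[OF heq_star_right[of A]]] heq_assoc] .
  show "heq (tprod A P) (tprod A Q)" using heq_trans[OF 1 heq_trans[OF heq_tprod_l[OF h] heq_sym[OF 2]]] .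
next
  assume h: "heq (tprod A P) (tprod A Q)"
  then show "heq (tprod (tstar A) P) (tprod (tstar A) Q)"
    using star_cancel assms by (auto simp: heq_def)
qed

lemma semigroup_S:
  assumes S: "S \<subseteq> T1 \<Sigma>" "closed2 S (pmult \<Sigma>)"
  shows "semigroup_on S (pmult \<Sigma>)"
  unfolding semigroup_on_def
proof (intro conjI ballI)
  fix a b assume "a \<in> S" "b \<in> S"
  then show "pmult \<Sigma> a b \<in> S" using S(2) by (simp add: closed2_def)
next
  fix a b c assume abc: "a \<in> S" "b \<in> S" "c \<in> S"
  obtain A where A: "A \<in> a" using T1_ne abc S(1) by blast
  obtain B where B: "B \<in> b" using T1_ne abc S(1) by blast
  obtain C where C: "C \<in> c" using T1_ne abc S(1) by blast
  have ab: "pmult \<Sigma> a b \<in> S" "\<forall>W\<in>pmult \<Sigma> a b. heq W (tprod A B)" using mult_rep[OF S abc(1,2) A B] by auto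
  obtain W1 where W1: "W1 \<in> pmult \<Sigma> a b" using T1_ne ab(1) S(1) by blast
  have bc: "pmult \<Sigma> b c \<in> S" "\<forall>W\<in>pmult \<Sigma> b c. heq W (tprod B C)" using mult_rep[OF S abc(2,3) B C] by auto
  obtain W2 where W2: "W2 \<in> pmult \<Sigma> b c" using T1_ne bc(1) S(1) by blast
  have l: "pmult \<Sigma> (pmult \<Sigma> a b) c \<in> S" "\<forall>W\<in>pmult \<Sigma> (pmult \<Sigma> a b) c. heq W (tprod W1 C)"
    using mult_rep[OF S ab(1) abc(3) W1 C] by auto
  have r: "pmult \<Sigma> a (pmult \<Sigma> b c) \<in> S" "\<forall>W\<in>pmult \<Sigma> a (pmult \<Sigma> b c). heq W (tprod A W2)"
    using mult_rep[OF S abc(1) bc(1) A W2] by auto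
  have h1: "heq (tprod W1 C) (tprod (tprod A B) C)" using heq_tprod_r ab(2) W1 by blast
  have h2: "heq (tprod A W2) (tprod A (tprod B C))" using heq_tprod_l bc(2) W2 by blast
  have "heq (tprod W1 C) (tprod A W2)" using heq_trans[OF h1 heq_trans[OF heq_assoc heq_sym[OF h2]]] .
  then show "pmult \<Sigma> (pmult \<Sigma> a b) c = pmult \<Sigma> a (pmult \<Sigma> b c)"
    using eq_heq[OF S(1) l(1) r(1) l(2) r(2)] by simp
qed

lemma idem_proj_S:
  assumes S: "S \<subseteq> T1 \<Sigma>" "closed2 S (pmult \<Sigma>)" and e: "e \<in> S" "pmult \<Sigma> e e = e" and E: "E \<in> e"
  shows "sv E = ev E"
proof -
  have ee: "pmult \<Sigma> e e \<in> S" "\<forall>W\<in>pmult \<Sigma> e e. heq W (tprod E E)" using mult_rep[OF S e(1) e(1) E E] by auto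
  have "\<forall>W\<in>e. heq W E" using mem_heq[OF S(1) e(1) E] .
  then have "heq (tprod E E) E" using eq_heq[OF S(1) ee(1) e(1) ee(2)] e(2) by simp
  moreover have t: "is_tree \<Sigma> E" using mem_tree[OF S(1) e(1) E] .
  obtain n where "haswalk E n" using tree_haswalk[OF t] by blast
  moreover obtain \<phi> where "pot (edges E) \<phi>" using tree_pot[OF t] by blast
  ultimately show ?thesis using idem_proj by (auto simp: heq_def)
qed

lemma idem_commute_S:
  assumes S: "S \<subseteq> T1 \<Sigma>" "closed2 S (pmult \<Sigma>)"
  shows "idem_commute S (pmult \<Sigma>)"
  unfolding idem_commute_def
proof (intro ballI impI)
  fix e f assume ef: "e \<in> S" "f \<in> S" and i: "pmult \<Sigma> e e = e \<and> pmult \<Sigma> f f = f"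
  obtain E where E: "E \<in> e" using T1_ne ef S(1) by blast
  obtain F where F: "F \<in> f" using T1_ne ef S(1) by blast
  have pE: "sv E = ev E" using idem_proj_S[OF S ef(1) _ E] i by simp
  have pF: "sv F = ev F" using idem_proj_S[OF S ef(2) _ F] i by simp
  have 1: "pmult \<Sigma> e f \<in> S" "\<forall>W\<in>pmult \<Sigma> e f. heq W (tprod E F)" using mult_rep[OF S ef E F] by auto
  have 2: "pmult \<Sigma> f e \<in> S" "\<forall>W\<in>pmult \<Sigma> f e. heq W (tprod F E)" using mult_rep[OF S ef(2,1) F E] by auto
  show "pmult \<Sigma> e f = pmult \<Sigma> f e" using eq_heq[OF S(1) 1(1) 2(1) 1(2) 2(2)] proj_comm[OF pE pF] by simp
qed

lemma plus_op_S:
  assumes S: "S \<subseteq> T1 \<Sigma>" "closed2 S (pmult \<Sigma>)" and P: "closed1 S (pplus \<Sigma>)"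
  shows "is_plus_op S (pmult \<Sigma>) (pplus \<Sigma>)"
  unfolding is_plus_op_def
proof (intro ballI conjI)
  fix a assume a: "a \<in> S"
  obtain A where A: "A \<in> a" using T1_ne a S(1) by blast
  have gA: "good A" using tree_good[OF mem_tree[OF S(1) a A]] .
  have pa: "pplus \<Sigma> a \<in> S" using P a by (simp add: closed1_def)
  then show "pplus \<Sigma> a \<in> S" .
  have paA: "\<forall>W\<in>pplus \<Sigma> a. heq W (tplus A)" using pplus_heq[of a \<Sigma> _ A] a A S(1) by auto
  obtain P0 where P0: "P0 \<in> pplus \<Sigma> a" using T1_ne pa S(1) by blast
  have P0A: "heq P0 (tplus A)" using paA P0 by blast
  have mm: "pmult \<Sigma> (pplus \<Sigma> a) (pplus \<Sigma> a) \<in> S" "\<forall>W\<in>pmult \<Sigma> (pplus \<Sigma> a) (pplus \<Sigma> a). heq W (tprod P0 P0)"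
    using mult_rep[OF S pa pa P0 P0] by auto
  have "heq (tprod P0 P0) (tplus A)"
    using heq_trans[OF heq_tprod[OF P0A P0A] proj_idem[of "tplus A"]] by simp
  then show "pmult \<Sigma> (pplus \<Sigma> a) (pplus \<Sigma> a) = pplus \<Sigma> a"
    using eq_heq[OF S(1) mm(1) pa mm(2) paA] by simp
  show "Rstar S (pmult \<Sigma>) (pplus \<Sigma> a) a"
    unfolding Rstar_def
  proof (intro ballI)
    fix x y assume x: "x \<in> S1 S" and y: "y \<in> S1 S"
    obtain X where X: "good X" "\<forall>a\<in>S. \<forall>A\<in>a. lmul1 (pmult \<Sigma>) x a \<in> S \<and> (\<forall>W\<in>lmul1 (pmult \<Sigma>) x a. heq W (tprod X A))"
      using lrep[OF S x] by blast
    obtain Y where Y: "good Y" "\<forall>a\<in>S. \<forall>A\<in>a. lmul1 (pmult \<Sigma>) y a \<in> S \<and> (\<forall>W\<in>lmul1 (pmult \<Sigma>) y a. heq W (tprod Y A))"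
      using lrep[OF S y] by blast
    have x0: "lmul1 (pmult \<Sigma>) x (pplus \<Sigma> a) \<in> S" "\<forall>W\<in>lmul1 (pmult \<Sigma>) x (pplus \<Sigma> a). heq W (tprod X P0)"
      using X(2) pa P0 by blast+
    have x1: "lmul1 (pmult \<Sigma>) x (pplus \<Sigma> a) \<in> S" "\<forall>W\<in>lmul1 (pmult \<Sigma>) x (pplus \<Sigma> a). heq W (tprod X (tplus A))"
      using x0 heq_trans[OF _ heq_tprod_l[OF P0A]] by blast+
    have y0: "lmul1 (pmult \<Sigma>) y (pplus \<Sigma> a) \<in> S" "\<forall>W\<in>lmul1 (pmult \<Sigma>) y (pplus \<Sigma> a). heq W (tprod Y P0)"
      using Y(2) pa P0 by blast+
    have y1: "lmul1 (pmult \<Sigma>) y (pplus \<Sigma> a) \<in> S" "\<forall>W\<in>lmul1 (pmult \<Sigma>) y (pplus \<Sigma> a). heq W (tprod Y (tplus A))"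
      using y0 heq_trans[OF _ heq_tprod_l[OF P0A]] by blast+
    have x2: "lmul1 (pmult \<Sigma>) x a \<in> S" "\<forall>W\<in>lmul1 (pmult \<Sigma>) x a. heq W (tprod X A)"
      using X(2) a A by blast+
    have y2: "lmul1 (pmult \<Sigma>) y a \<in> S" "\<forall>W\<in>lmul1 (pmult \<Sigma>) y a. heq W (tprod Y A)"
      using Y(2) a A by blast+
    show "lmul1 (pmult \<Sigma>) x (pplus \<Sigma> a) = lmul1 (pmult \<Sigma>) y (pplus \<Sigma> a) \<longleftrightarrow>
          lmul1 (pmult \<Sigma>) x a = lmul1 (pmult \<Sigma>) y a"
      using eq_heq[OF S(1) x1(1) y1(1) x1(2) y1(2)] eq_heq[OF S(1) x2(1) y2(1) x2(2) y2(2)]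
        plus_equiv[OF X(1) Y(1) gA] by simp
  qed
qed

lemma star_op_S:
  assumes S: "S \<subseteq> T1 \<Sigma>" "closed2 S (pmult \<Sigma>)" and P: "closed1 S (pstar \<Sigma>)"
  shows "is_star_op S (pmult \<Sigma>) (pstar \<Sigma>)"
  unfolding is_star_op_def
proof (intro ballI conjI)
  fix a assume a: "a \<in> S"
  obtain A where A: "A \<in> a" using T1_ne a S(1) by blast
  have gA: "good A" using tree_good[OF mem_tree[OF S(1) a A]] .
  have pa: "pstar \<Sigma> a \<in> S" using P a by (simp add: closed1_def)
  then show "pstar \<Sigma> a \<in> S" .
  have paA: "\<forall>W\<in>pstar \<Sigma> a. heq W (tstar A)" using pstar_heq[of a \<Sigma> _ A] a A S(1) by auto
  obtain P0 where P0: "P0 \<in> pstar \<Sigma> a" using T1_ne pa S(1) by blast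
  have P0A: "heq P0 (tstar A)" using paA P0 by blast
  have mm: "pmult \<Sigma> (pstar \<Sigma> a) (pstar \<Sigma> a) \<in> S" "\<forall>W\<in>pmult \<Sigma> (pstar \<Sigma> a) (pstar \<Sigma> a). heq W (tprod P0 P0)"
    using mult_rep[OF S pa pa P0 P0] by auto
  have "heq (tprod P0 P0) (tstar A)"
    using heq_trans[OF heq_tprod[OF P0A P0A] proj_idem[of "tstar A"]] by simp
  then show "pmult \<Sigma> (pstar \<Sigma> a) (pstar \<Sigma> a) = pstar \<Sigma> a"
    using eq_heq[OF S(1) mm(1) pa mm(2) paA] by simp
  show "Lstar S (pmult \<Sigma>) (pstar \<Sigma> a) a"
    unfolding Lstar_def
  proof (intro ballI)
    fix x y assume x: "x \<in> S1 S" and y: "y \<in> S1 S"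
    obtain X where X: "good X" "\<forall>a\<in>S. \<forall>A\<in>a. rmul1 (pmult \<Sigma>) a x \<in> S \<and> (\<forall>W\<in>rmul1 (pmult \<Sigma>) a x. heq W (tprod A X))"
      using rrep[OF S x] by blast
    obtain Y where Y: "good Y" "\<forall>a\<in>S. \<forall>A\<in>a. rmul1 (pmult \<Sigma>) a y \<in> S \<and> (\<forall>W\<in>rmul1 (pmult \<Sigma>) a y. heq W (tprod A Y))"
      using rrep[OF S y] by blast
    have x0: "rmul1 (pmult \<Sigma>) (pstar \<Sigma> a) x \<in> S" "\<forall>W\<in>rmul1 (pmult \<Sigma>) (pstar \<Sigma> a) x. heq W (tprod P0 X)"
      using X(2) pa P0 by blast+
    have x1: "rmul1 (pmult \<Sigma>) (pstar \<Sigma> a) x \<in> S" "\<forall>W\<in>rmul1 (pmult \<Sigma>) (pstar \<Sigma> a) x. heq W (tprod (tstar A) X)"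
      using x0 heq_trans[OF _ heq_tprod_r[OF P0A]] by blast+
    have y0: "rmul1 (pmult \<Sigma>) (pstar \<Sigma> a) y \<in> S" "\<forall>W\<in>rmul1 (pmult \<Sigma>) (pstar \<Sigma> a) y. heq W (tprod P0 Y)"
      using Y(2) pa P0 by blast+
    have y1: "rmul1 (pmult \<Sigma>) (pstar \<Sigma> a) y \<in> S" "\<forall>W\<in>rmul1 (pmult \<Sigma>) (pstar \<Sigma> a) y. heq W (tprod (tstar A) Y)"
      using y0 heq_trans[OF _ heq_tprod_r[OF P0A]] by blast+
    have x2: "rmul1 (pmult \<Sigma>) a x \<in> S" "\<forall>W\<in>rmul1 (pmult \<Sigma>) a x. heq W (tprod A X)"
      using X(2) a A by blast+
    have y2: "rmul1 (pmult \<Sigma>) a y \<in> S" "\<forall>W\<in>rmul1 (pmult \<Sigma>) a y. heq W (tprod A Y)"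
      using Y(2) a A by blast+
    show "rmul1 (pmult \<Sigma>) (pstar \<Sigma> a) x = rmul1 (pmult \<Sigma>) (pstar \<Sigma> a) y \<longleftrightarrow>
          rmul1 (pmult \<Sigma>) a x = rmul1 (pmult \<Sigma>) a y"
      using eq_heq[OF S(1) x1(1) y1(1) x1(2) y1(2)] eq_heq[OF S(1) x2(1) y2(1) x2(2) y2(2)]
        star_equiv[OF gA X(1) Y(1)] by simp
  qed
qed

lemma left_adequate_S:
  assumes "S \<subseteq> T1 \<Sigma>" "closed2 S (pmult \<Sigma>)" "closed1 S (pplus \<Sigma>)"
  shows "left_adequate S (pmult \<Sigma>) \<and> is_plus_op S (pmult \<Sigma>) (pplus \<Sigma>)"
proof -
  have p: "is_plus_op S (pmult \<Sigma>) (pplus \<Sigma>)" using plus_op_S[OF assms] .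
  then have "\<forall>a\<in>S. \<exists>e\<in>S. pmult \<Sigma> e e = e \<and> Rstar S (pmult \<Sigma>) e a"
    unfolding is_plus_op_def by blast
  then show ?thesis using p semigroup_S[OF assms(1,2)] idem_commute_S[OF assms(1,2)]
    by (simp add: left_adequate_def)
qed

lemma right_adequate_S:
  assumes "S \<subseteq> T1 \<Sigma>" "closed2 S (pmult \<Sigma>)" "closed1 S (pstar \<Sigma>)"
  shows "right_adequate S (pmult \<Sigma>) \<and> is_star_op S (pmult \<Sigma>) (pstar \<Sigma>)"
proof -
  have p: "is_star_op S (pmult \<Sigma>) (pstar \<Sigma>)" using star_op_S[OF assms] .
  then have "\<forall>a\<in>S. \<exists>e\<in>S. pmult \<Sigma> e e = e \<and> Lstar S (pmult \<Sigma>) e a"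
    unfolding is_star_op_def by blast
  then show ?thesis using p semigroup_S[OF assms(1,2)] idem_commute_S[OF assms(1,2)]
    by (simp add: right_adequate_def)
qed

theorem theorem4p10:
  fixes \<Sigma> :: "'a set"
  shows "(\<forall>S. S \<subseteq> T1 \<Sigma> \<and> closed2 S (pmult \<Sigma>) \<and> closed1 S (pplus \<Sigma>) \<and> closed1 S (pstar \<Sigma>)
            \<longrightarrow> adequate S (pmult \<Sigma>) \<and> is_plus_op S (pmult \<Sigma>) (pplus \<Sigma>)
                \<and> is_star_op S (pmult \<Sigma>) (pstar \<Sigma>)) \<and>
         (\<forall>S. S \<subseteq> T1 \<Sigma> \<and> closed2 S (pmult \<Sigma>) \<and> closed1 S (pplus \<Sigma>)
            \<longrightarrow> left_adequate S (pmult \<Sigma>) \<and> is_plus_op S (pmult \<Sigma>) (pplus \<Sigma>)) \<and>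
         (\<forall>S. S \<subseteq> T1 \<Sigma> \<and> closed2 S (pmult \<Sigma>) \<and> closed1 S (pstar \<Sigma>)
            \<longrightarrow> right_adequate S (pmult \<Sigma>) \<and> is_star_op S (pmult \<Sigma>) (pstar \<Sigma>))"
  using left_adequate_S right_adequate_S by (auto simp: adequate_def)


end
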